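(* Suppose $x\in{\cal B}$ and ${\bm\theta}={\bm\theta}^0-{\mathbf e}$ where ${\bm\theta}^0=Hx$ and ${\mathbf e}\in\mathbb R^N$. Then $\lim_{k\to\infty}(P_{\cal B}P_{{\cal C}({\bm\theta})})^k z=H^\dagger({\bm\theta}^0-\bar{\mathbf e})$, where $\bar{\mathbf e}$ is the $\langle\cdot,\cdot\rangle_N$-orthogonal projection of ${\mathbf e}$ onto $\mathrm{ran}(H)$, and $\|\bar{\mathbf e}\|_N^2+\|{\mathbf e}-\bar{\mathbf e}\|_N^2=\|{\mathbf e}\|_N^2$; in particular $\|\bar{\mathbf e}\|_N\le\|{\mathbf e}\|_N$.
   Context: $D=\mathbb R$ or $[0,T]$ ($T$ an odd positive integer); $L^2(D)$ is the real Hilbert space with $\langle u,v\rangle=\int_D uv\,dt$. ${\cal B}$ is the closed subspace of signals bandlimited to $[-\pi,\pi]$ and $P_{\cal B}$ the orthogonal projection onto it; $z$ is the zero function. Fix $\alpha\ge0$, $N\ge1$, instants $0=t_0<\dots<t_N$ in $D$, $h_n(t)=e^{-\alpha(t_n-t)}\mathbf 1_{[t_{n-1},t_n)}(t)$. ${\cal C}({\bm\theta})=\{u\in L^2(D):\langle h_n,u\rangle=\theta_n\ \forall n\}$ with orthogonal projection $P_{{\cal C}({\bm\theta})}$. $H:{\cal B}\to\mathbb R^N$, $Hu=(\langle h_n,u\rangle)_n$. $\langle{\mathbf u},{\mathbf v}\rangle_N=\sum_n u_nv_n/\|h_n\|^2$, norm $\|\cdot\|_N$. For ${\mathbf w}\in\mathbb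 R^N$, $H^\dagger{\mathbf w}$ denotes the minimal-norm element of $\{u\in{\cal B}:Hu=\bar{\mathbf w}\}$, where $\bar{\mathbf w}$ is the $\langle\cdot,\cdot\rangle_N$-orthogonal projection of ${\mathbf w}$ onto $\mathrm{ran}(H)$. *)

theory Defs
  imports "HOL-Analysis.Analysis"
begin

datatype domain = RealLine | Interval nat

fun dset :: "domain \<Rightarrow> real set" where
  "dset RealLine = UNIV"
| "dset (Interval T) = {0..real T}"

text \<open>L^2(D): (Borel) measurable real functions, square integrable over D.
  Only values on D matter; all norms/inner products integrate over D.\<close>
definition L2 :: "real set \<Rightarrow> (real \<Rightarrow> real) set" where
  "L2 D = {u. u \<in> borel_measurable lborel \<and> set_integrable lborel D (\<lambda>t. (u t)^2)}"

definition ip :: "real set \<Rightarrow> (real \<Rightarrow> real) \<Rightarrow> (real \<Rightarrow> real) \<Rightarrow> real" where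
  "ip D u v = (LINT t:D|lborel. u t * v t)"

definition nrm :: "real set \<Rightarrow> (real \<Rightarrow> real) \<Rightarrow> real" where
  "nrm D u = sqrt (ip D u u)"

text \<open>Orthogonal projection onto a closed (affine) subset S of L^2(D):
  a nearest point of S (unique up to a.e. equality on D).\<close>
definition proj :: "real set \<Rightarrow> (real \<Rightarrow> real) set \<Rightarrow> (real \<Rightarrow> real) \<Rightarrow> (real \<Rightarrow> real)" where
  "proj D S u = (SOME v. v \<in> S \<and> (\<forall>w\<in>S. nrm D (\<lambda>t. u t - v t) \<le> nrm D (\<lambda>t. u t - w t)))"

text \<open>On [0,T], T odd: T-periodic
  bandlimited signals, i.e. real trigonometric polynomials with frequencies
  2 pi k/T, |k| <= (T-1)/2.\<close>
fun bandlimited :: "domain \<Rightarrow> (real \<Rightarrow> real) \<Rightarrow> bool" where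
  "bandlimited RealLine u =
     (\<exists>F :: real \<Rightarrow> complex. F \<in> borel_measurable lborel \<and>
        set_integrable lborel {-pi..pi} (\<lambda>w. (cmod (F w))^2) \<and>
        (\<forall>t. complex_of_real (u t) =
              set_lebesgue_integral lborel {-pi..pi} (\<lambda>w. F w * exp (\<i> * complex_of_real (w * t)))))"
| "bandlimited (Interval T) u =
     (\<exists>a b :: nat \<Rightarrow> real. \<forall>t\<in>{0..real T}.
        u t = a 0 + (\<Sum>k=1..(T - 1) div 2.
                a k * cos (2 * pi * real k * t / real T) + b k * sin (2 * pi * real k * t / real T)))"

definition BL :: "domain \<Rightarrow> (real \<Rightarrow> real) set" where
  "BL dm = {u \<in> L2 (dset dm). bandlimited dm u}"

definition hfun :: "real \<Rightarrow> (nat \<Rightarrow> real) \<Rightarrow> nat \<Rightarrow> real \<Rightarrow> real" where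
  "hfun \<alpha> tt n = (\<lambda>s. exp (- \<alpha> * (tt n - s)) * indicator {tt (n - 1)..<tt n} s)"

text \<open>Vectors of R^N are functions nat => real, only indices 1..N are used.\<close>
definition Hmap :: "domain \<Rightarrow> real \<Rightarrow> (nat \<Rightarrow> real) \<Rightarrow> nat \<Rightarrow> (real \<Rightarrow> real) \<Rightarrow> nat \<Rightarrow> real" where
  "Hmap dm \<alpha> tt N u = (\<lambda>n. if n \<in> {1..N} then ip (dset dm) (hfun \<alpha> tt n) u else 0)"

definition Cset :: "domain \<Rightarrow> real \<Rightarrow> (nat \<Rightarrow> real) \<Rightarrow> nat \<Rightarrow> (nat \<Rightarrow> real) \<Rightarrow> (real \<Rightarrow> real) set" where
  "Cset dm \<alpha> tt N \<theta> = {u \<in> L2 (dset dm). \<forall>n\<in>{1..N}. ip (dset dm) (hfun \<alpha> tt n) u = \<theta> n}"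

definition ipN :: "domain \<Rightarrow> real \<Rightarrow> (nat \<Rightarrow> real) \<Rightarrow> nat \<Rightarrow> (nat \<Rightarrow> real) \<Rightarrow> (nat \<Rightarrow> real) \<Rightarrow> real" where
  "ipN dm \<alpha> tt N x y = (\<Sum>n=1..N. x n * y n / (nrm (dset dm) (hfun \<alpha> tt n))^2)"

definition nrmN :: "domain \<Rightarrow> real \<Rightarrow> (nat \<Rightarrow> real) \<Rightarrow> nat \<Rightarrow> (nat \<Rightarrow> real) \<Rightarrow> real" where
  "nrmN dm \<alpha> tt N x = sqrt (ipN dm \<alpha> tt N x x)"

definition projN :: "domain \<Rightarrow> real \<Rightarrow> (nat \<Rightarrow> real) \<Rightarrow> nat \<Rightarrow> (nat \<Rightarrow> real) \<Rightarrow> nat \<Rightarrow> real" where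
  "projN dm \<alpha> tt N w = (SOME v. v \<in> Hmap dm \<alpha> tt N ` BL dm \<and>
      (\<forall>v'\<in>Hmap dm \<alpha> tt N ` BL dm.
         nrmN dm \<alpha> tt N (\<lambda>n. w n - v n) \<le> nrmN dm \<alpha> tt N (\<lambda>n. w n - v' n)))"

definition Hdag :: "domain \<Rightarrow> real \<Rightarrow> (nat \<Rightarrow> real) \<Rightarrow> nat \<Rightarrow> (nat \<Rightarrow> real) \<Rightarrow> real \<Rightarrow> real" where
  "Hdag dm \<alpha> tt N w = (SOME u. u \<in> BL dm \<and> Hmap dm \<alpha> tt N u = projN dm \<alpha> tt N w \<and>
      (\<forall>u'\<in>BL dm. Hmap dm \<alpha> tt N u' = projN dm \<alpha> tt N w \<longrightarrow>
          nrm (dset dm) u \<le> nrm (dset dm) u'))"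

end

theory Submission
  imports Defs "HOL-Probability.Sinc_Integral"
begin


definition gnrm :: "(('a\<Rightarrow>real) \<Rightarrow> ('a\<Rightarrow>real) \<Rightarrow> real) \<Rightarrow> ('a\<Rightarrow>real) \<Rightarrow> real" where
  "gnrm f u = sqrt (f u u)"

definition gproj where
  "gproj f S u = (SOME v. v \<in> S \<and> (\<forall>w\<in>S. gnrm f (\<lambda>t. u t - v t) \<le> gnrm f (\<lambda>t. u t - w t)))"

definition lin :: "'i set \<Rightarrow> ('i \<Rightarrow> 'a \<Rightarrow> real) \<Rightarrow> ('a \<Rightarrow> real) set" where
  "lin I g = {v. \<exists>c. v = (\<lambda>t. \<Sum>i\<in>I. c i * g i t)}"

locale sip =
  fixes V :: "('a \<Rightarrow> real) set" and f :: "('a \<Rightarrow> real) \<Rightarrow> ('a \<Rightarrow> real) \<Rightarrow> real"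
  assumes V_zero: "(\<lambda>_. 0) \<in> V"
  and V_lin: "u \<in> V \<Longrightarrow> v \<in> V \<Longrightarrow> (\<lambda>t. a * u t + b * v t) \<in> V"
  and f_sym: "u \<in> V \<Longrightarrow> v \<in> V \<Longrightarrow> f u v = f v u"
  and f_lin: "u \<in> V \<Longrightarrow> v \<in> V \<Longrightarrow> w \<in> V \<Longrightarrow> f (\<lambda>t. a * u t + b * v t) w = a * f u w + b * f v w"
  and f_pos: "u \<in> V \<Longrightarrow> f u u \<ge> 0"
begin

lemma V_add: "u \<in> V \<Longrightarrow> v \<in> V \<Longrightarrow> (\<lambda>t. u t + v t) \<in> V"
  using V_lin[of u v 1 1] by simp
lemma V_diff: "u \<in> V \<Longrightarrow> v \<in> V \<Longrightarrow> (\<lambda>t. u t - v t) \<in> V"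
  using V_lin[of u v 1 "-1"] by simp
lemma V_scale: "u \<in> V \<Longrightarrow> (\<lambda>t. a * u t) \<in> V"
  using V_lin[of u u a 0] by simp
lemma V_sum: "finite I \<Longrightarrow> (\<And>i. i \<in> I \<Longrightarrow> g i \<in> V) \<Longrightarrow> (\<lambda>t. \<Sum>i\<in>I. c i * g i t) \<in> V"
proof (induction I rule: finite_induct)
  case empty then show ?case using V_zero by simp
next
  case (insert j I)
  then have "(\<lambda>t. c j * g j t + 1 * (\<Sum>i\<in>I. c i * g i t)) \<in> V"
    by (intro V_lin) auto
  then show ?case using insert by simp
qed

lemma f_add_left: "u \<in> V \<Longrightarrow> v \<in> V \<Longrightarrow> w \<in> V \<Longrightarrow> f (\<lambda>t. u t + v t) w = f u w + f v w"
  using f_lin[of u v w 1 1] by simp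
lemma f_diff_left: "u \<in> V \<Longrightarrow> v \<in> V \<Longrightarrow> w \<in> V \<Longrightarrow> f (\<lambda>t. u t - v t) w = f u w - f v w"
  using f_lin[of u v w 1 "-1"] by simp
lemma f_scale_left: "u \<in> V \<Longrightarrow> w \<in> V \<Longrightarrow> f (\<lambda>t. a * u t) w = a * f u w"
  using f_lin[of u u w a 0] by simp
lemma f_zero_left: "w \<in> V \<Longrightarrow> f (\<lambda>_. 0) w = 0"
  using f_scale_left[of w w 0] by simp
lemma f_add_right: "u \<in> V \<Longrightarrow> v \<in> V \<Longrightarrow> w \<in> V \<Longrightarrow> f w (\<lambda>t. u t + v t) = f w u + f w v"
  using f_sym[OF _ V_add, of w u v] f_add_left[of u v w] f_sym[of u w] f_sym[of v w] by simp
lemma f_diff_right: "u \<in> V \<Longrightarrow> v \<in> V \<Longrightarrow> w \<in> V \<Longrightarrow> f w (\<lambda>t. u t - v t) = f w u - f w v"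
  using f_sym[OF _ V_diff, of w u v] f_diff_left[of u v w] f_sym[of u w] f_sym[of v w] by simp
lemma f_scale_right: "u \<in> V \<Longrightarrow> w \<in> V \<Longrightarrow> f w (\<lambda>t. a * u t) = a * f w u"
  using f_sym[OF _ V_scale, of w u a] f_scale_left[of u w a] f_sym[of u w] by simp
lemma f_zero_right: "w \<in> V \<Longrightarrow> f w (\<lambda>_. 0) = 0"
  using f_sym[OF _ V_zero, of w] f_zero_left[of w] by simp

lemma f_sum_left: "finite I \<Longrightarrow> (\<And>i. i \<in> I \<Longrightarrow> g i \<in> V) \<Longrightarrow> w \<in> V \<Longrightarrow>
   f (\<lambda>t. \<Sum>i\<in>I. c i * g i t) w = (\<Sum>i\<in>I. c i * f (g i) w)"
proof (induction I rule: finite_induct)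
  case empty then show ?case using f_zero_left by simp
next
  case (insert j I)
  have "f (\<lambda>t. c j * g j t + 1 * (\<Sum>i\<in>I. c i * g i t)) w = c j * f (g j) w + 1 * f (\<lambda>t. \<Sum>i\<in>I. c i * g i t) w"
    using insert by (intro f_lin V_sum) auto
  then show ?case using insert by simp
qed

lemma f_sum_right: "finite I \<Longrightarrow> (\<And>i. i \<in> I \<Longrightarrow> g i \<in> V) \<Longrightarrow> w \<in> V \<Longrightarrow>
   f w (\<lambda>t. \<Sum>i\<in>I. c i * g i t) = (\<Sum>i\<in>I. c i * f w (g i))"
  by (subst f_sym) (auto intro: V_sum simp: f_sum_left f_sym)

lemma f_expand: "u \<in> V \<Longrightarrow> v \<in> V \<Longrightarrow> f (\<lambda>t. u t - v t) (\<lambda>t. u t - v t) = f u u - 2 * f u v + f v v"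
  by (simp add: f_diff_left f_diff_right V_diff f_sym[of v u])

lemma f_expand_add: "u \<in> V \<Longrightarrow> v \<in> V \<Longrightarrow> f (\<lambda>t. u t + v t) (\<lambda>t. u t + v t) = f u u + 2 * f u v + f v v"
  by (simp add: f_add_left f_add_right V_add f_sym[of v u])

lemma null_orth:
  assumes u: "u \<in> V" and v: "v \<in> V" and n: "f u u = 0"
  shows "f u v = 0"
proof -
  define c where "c = f v v + 1"
  have c1: "c \<ge> 1" using f_pos[OF v] by (simp add: c_def)
  define s where "s = - f u v / c"
  have "0 \<le> f (\<lambda>t. 1 * u t + s * v t) (\<lambda>t. 1 * u t + s * v t)"
    by (intro f_pos V_lin u v)
  also have "\<dots> = 1 * f u (\<lambda>t. 1 * u t + s * v t) + s * f v (\<lambda>t. 1 * u t + s * v t)"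
    by (intro f_lin u v V_lin)
  also have "f u (\<lambda>t. 1 * u t + s * v t) = 1 * f u u + s * f u v"
    using f_lin[OF u v u, of 1 s] f_sym u v V_lin by metis
  also have "f v (\<lambda>t. 1 * u t + s * v t) = 1 * f u v + s * f v v"
    using f_lin[OF u v v, of 1 s] f_sym u v V_lin by metis
  also have "1 * (1 * f u u + s * f u v) + s * (1 * f u v + s * f v v) = f u u + 2 * s * f u v + s * s * f v v"
    by (simp add: algebra_simps)
  also have "\<dots> = (f u v)^2 * (f v v - 2 * c) / c^2"
    using c1 by (simp add: n s_def field_simps power2_eq_square)
  finally have "0 \<le> (f u v)^2 * (f v v - 2 * c) / c^2" .
  moreover have "f v v - 2 * c < 0" using f_pos[OF v] by (simp add: c_def)
  moreover have "c^2 > 0" using c1 by simp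
  ultimately have "0 \<le> (f u v)^2 * (f v v - 2 * c)" by (simp add: zero_le_divide_iff)
  then have "(f u v)^2 \<le> 0" using \<open>f v v - 2 * c < 0\<close> by (simp add: zero_le_mult_iff)
  then show ?thesis by simp
qed

definition eqv :: "('a \<Rightarrow> real) \<Rightarrow> ('a \<Rightarrow> real) \<Rightarrow> bool" where
  "eqv u v \<longleftrightarrow> f (\<lambda>t. u t - v t) (\<lambda>t. u t - v t) = 0"

lemma eqv_f: "eqv u v \<Longrightarrow> u \<in> V \<Longrightarrow> v \<in> V \<Longrightarrow> w \<in> V \<Longrightarrow> f u w = f v w"
  using null_orth[of "\<lambda>t. u t - v t" w] by (simp add: eqv_def V_diff f_diff_left)

lemma eqv_f_right: "eqv u v \<Longrightarrow> u \<in> V \<Longrightarrow> v \<in> V \<Longrightarrow> w \<in> V \<Longrightarrow> f w u = f w v"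
  using eqv_f[of u v w] f_sym[of w u] f_sym[of w v] by simp

lemma eqv_refl: "u \<in> V \<Longrightarrow> eqv u u"
  unfolding eqv_def using f_zero_left[OF V_zero] by simp

lemma eqv_sym: "eqv u v \<Longrightarrow> u \<in> V \<Longrightarrow> v \<in> V \<Longrightarrow> eqv v u"
  unfolding eqv_def using f_expand by (simp add: f_sym)

lemma eqv_norm: "eqv u v \<Longrightarrow> u \<in> V \<Longrightarrow> v \<in> V \<Longrightarrow> f u u = f v v"
  using eqv_f[of u v u] eqv_f_right[of u v v] by simp

lemma eqv_trans: "eqv u v \<Longrightarrow> eqv v w \<Longrightarrow> u \<in> V \<Longrightarrow> v \<in> V \<Longrightarrow> w \<in> V \<Longrightarrow> eqv u w"
proof -
  assume a: "eqv u v" "eqv v w" "u \<in> V" "v \<in> V" "w \<in> V"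
  have "f u u = f v u" "f u w = f v w" "f w w = f w v" "f v v = f v w" "f u v = f u w"
    using eqv_f[OF a(1,3,4)] eqv_f_right[OF a(2,4,5)] a by auto
  then show ?thesis using f_expand[OF a(3,5)] f_expand[OF a(4,5)] a(2) f_sym[of u v] a
    unfolding eqv_def by simp
qed

lemma eqv_null_iff: "u \<in> V \<Longrightarrow> v \<in> V \<Longrightarrow> eqv u v \<longleftrightarrow> f (\<lambda>t. u t - v t) (\<lambda>t. u t - v t) = 0"
  by (simp add: eqv_def)

lemma eqv_add: "eqv u u' \<Longrightarrow> eqv v v' \<Longrightarrow> u \<in> V \<Longrightarrow> u' \<in> V \<Longrightarrow> v \<in> V \<Longrightarrow> v' \<in> V \<Longrightarrow>
   eqv (\<lambda>t. u t + v t) (\<lambda>t. u' t + v' t)"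
proof -
  assume a: "eqv u u'" "eqv v v'" "u \<in> V" "u' \<in> V" "v \<in> V" "v' \<in> V"
  let ?p = "\<lambda>t. u t - u' t" and ?q = "\<lambda>t. v t - v' t"
  have p: "?p \<in> V" "f ?p ?p = 0" and q: "?q \<in> V" "f ?q ?q = 0" using a V_diff by (auto simp: eqv_def)
  have "f (\<lambda>t. ?p t + ?q t) (\<lambda>t. ?p t + ?q t) = 0"
    using f_expand_add[OF p(1) q(1)] null_orth[OF p(1) q(1)] p q by simp
  then show ?thesis unfolding eqv_def by (simp add: algebra_simps)
qed

lemma eqv_diff: "eqv u u' \<Longrightarrow> eqv v v' \<Longrightarrow> u \<in> V \<Longrightarrow> u' \<in> V \<Longrightarrow> v \<in> V \<Longrightarrow> v' \<in> V \<Longrightarrow>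
   eqv (\<lambda>t. u t - v t) (\<lambda>t. u' t - v' t)"
proof -
  assume a: "eqv u u'" "eqv v v'" "u \<in> V" "u' \<in> V" "v \<in> V" "v' \<in> V"
  have "eqv v v'" by fact
  then have n: "eqv (\<lambda>t. -1 * v t) (\<lambda>t. -1 * v' t)"
    unfolding eqv_def using a f_scale_left f_scale_right V_diff
    by (simp add: algebra_simps f_diff_left f_diff_right V_scale)
  have m1: "(\<lambda>t. -1 * v t) \<in> V" using a(5) by (rule V_scale)
  have m2: "(\<lambda>t. -1 * v' t) \<in> V" using a(6) by (rule V_scale)
  have "eqv (\<lambda>t. u t + -1 * v t) (\<lambda>t. u' t + -1 * v' t)"
    by (rule eqv_add[OF a(1) n a(3) a(4) m1 m2])
  then show ?thesis by simp
qed

lemma proj_char: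
  assumes S: "S \<subseteq> V" and u: "u \<in> V" and p: "p \<in> S"
    and orth: "\<And>w. w \<in> S \<Longrightarrow> f (\<lambda>t. u t - p t) (\<lambda>t. p t - w t) = 0"
  shows "gproj f S u \<in> S \<and> eqv (gproj f S u) p"
proof -
  have pV: "p \<in> V" using S p by auto
  have pyth: "f (\<lambda>t. u t - w t) (\<lambda>t. u t - w t) = f (\<lambda>t. u t - p t) (\<lambda>t. u t - p t) + f (\<lambda>t. p t - w t) (\<lambda>t. p t - w t)"
    if w: "w \<in> S" for w
  proof -
    have wV: "w \<in> V" using S w by auto
    have "f (\<lambda>t. (u t - p t) + (p t - w t)) (\<lambda>t. (u t - p t) + (p t - w t)) =
       f (\<lambda>t. u t - p t) (\<lambda>t. u t - p t) + 2 * f (\<lambda>t. u t - p t) (\<lambda>t. p t - w t) + f (\<lambda>t. p t - w t) (\<lambda>t. p t - w t)"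
      using f_expand_add[of "\<lambda>t. u t - p t" "\<lambda>t. p t - w t"] u pV wV V_diff by simp
    then show ?thesis using orth[OF w] by simp
  qed
  have ex: "\<exists>v. v \<in> S \<and> (\<forall>w\<in>S. gnrm f (\<lambda>t. u t - v t) \<le> gnrm f (\<lambda>t. u t - w t))"
  proof (intro exI[of _ p] conjI ballI)
    fix w assume w: "w \<in> S"
    have "0 \<le> f (\<lambda>t. p t - w t) (\<lambda>t. p t - w t)" using w S pV by (intro f_pos V_diff) auto
    then show "gnrm f (\<lambda>t. u t - p t) \<le> gnrm f (\<lambda>t. u t - w t)"
      unfolding gnrm_def pyth[OF w] by (intro real_sqrt_le_mono) simp
  qed (rule p)
  define q where "q = gproj f S u"
  have q: "q \<in> S" "\<forall>w\<in>S. gnrm f (\<lambda>t. u t - q t) \<le> gnrm f (\<lambda>t. u t - w t)"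
    using someI_ex[OF ex] unfolding q_def gproj_def by blast+
  have qV: "q \<in> V" using q S by auto
  have "gnrm f (\<lambda>t. u t - q t) \<le> gnrm f (\<lambda>t. u t - p t)" using q p by auto
  then have "f (\<lambda>t. u t - q t) (\<lambda>t. u t - q t) \<le> f (\<lambda>t. u t - p t) (\<lambda>t. u t - p t)"
    unfolding gnrm_def using f_pos[OF V_diff[OF u qV]] f_pos[OF V_diff[OF u pV]] by simp
  then have "f (\<lambda>t. p t - q t) (\<lambda>t. p t - q t) \<le> 0" using pyth[OF q(1)] by simp
  then have "f (\<lambda>t. p t - q t) (\<lambda>t. p t - q t) = 0" using f_pos[OF V_diff[OF pV qV]] by simp
  then have "eqv p q" by (simp add: eqv_def)
  then show ?thesis using q qV pV eqv_sym unfolding q_def by blast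
qed

lemma lin_V: "finite I \<Longrightarrow> (\<And>i. i \<in> I \<Longrightarrow> g i \<in> V) \<Longrightarrow> lin I g \<subseteq> V"
  unfolding lin_def using V_sum by auto

end

lemma lin_lin: "v \<in> lin I g \<Longrightarrow> w \<in> lin I g \<Longrightarrow> (\<lambda>t. a * v t + b * w t) \<in> lin I g"
proof -
  assume "v \<in> lin I g" "w \<in> lin I g"
  then obtain c d where "v = (\<lambda>t. \<Sum>i\<in>I. c i * g i t)" "w = (\<lambda>t. \<Sum>i\<in>I. d i * g i t)"
    unfolding lin_def by auto
  then have "(\<lambda>t. a * v t + b * w t) = (\<lambda>t. \<Sum>i\<in>I. (a * c i + b * d i) * g i t)"
    by (simp add: sum_distrib_left sum.distrib algebra_simps)
  then show ?thesis unfolding lin_def by (intro CollectI exI[of _ "\<lambda>i. a * c i + b * d i"])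
qed

lemma lin_mono: "j \<notin> I \<Longrightarrow> finite I \<Longrightarrow> lin I g \<subseteq> lin (insert j I) g"
proof
  fix v assume "j \<notin> I" "finite I" "v \<in> lin I g"
  then obtain c where "v = (\<lambda>t. \<Sum>i\<in>I. c i * g i t)" unfolding lin_def by auto
  then have "v = (\<lambda>t. \<Sum>i\<in>insert j I. (c(j:=0)) i * g i t)"
    using \<open>j \<notin> I\<close> \<open>finite I\<close> by (auto intro!: sum.cong)
  then show "v \<in> lin (insert j I) g" unfolding lin_def by (intro CollectI exI[of _ "c(j:=0)"])
qed

lemma lin_gen: "j \<in> I \<Longrightarrow> finite I \<Longrightarrow> g j \<in> lin I g"
proof -
  assume "j \<in> I" "finite I"
  have "g j = (\<lambda>t. \<Sum>i\<in>I. (if i = j then 1 else 0) * g i t)"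
  proof (rule ext)
    fix t
    have "(\<Sum>i\<in>I. (if i = j then 1 else 0) * g i t) = (\<Sum>i\<in>I. if j = i then g j t else 0)"
      by (rule sum.cong) auto
    then show "g j t = (\<Sum>i\<in>I. (if i = j then 1 else 0) * g i t)" using \<open>j \<in> I\<close> \<open>finite I\<close> by simp
  qed
  then show ?thesis unfolding lin_def by (intro CollectI exI[of _ "\<lambda>i. if i = j then 1 else 0"])
qed

lemma lin_zero: "(\<lambda>_. 0) \<in> lin I g"
  unfolding lin_def by (rule CollectI, rule exI[of _ "\<lambda>_. 0"]) simp

lemma lin_insert: "j \<notin> I \<Longrightarrow> finite I \<Longrightarrow> w \<in> lin (insert j I) g \<Longrightarrow> \<exists>a z. z \<in> lin I g \<and> w = (\<lambda>t. a * g j t + z t)"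
proof -
  assume a: "j \<notin> I" "finite I" "w \<in> lin (insert j I) g"
  then obtain c where "w = (\<lambda>t. \<Sum>i\<in>insert j I. c i * g i t)" unfolding lin_def by auto
  then have "w = (\<lambda>t. c j * g j t + (\<Sum>i\<in>I. c i * g i t))" using a by simp
  moreover have "(\<lambda>t. \<Sum>i\<in>I. c i * g i t) \<in> lin I g" unfolding lin_def by (intro CollectI exI[of _ c]) (rule refl)
  ultimately show ?thesis by (intro exI[of _ "c j"] exI[of _ "\<lambda>t. \<Sum>i\<in>I. c i * g i t"]) simp
qed

context sip begin

lemma gs:
  assumes "finite I" "\<And>i. i \<in> I \<Longrightarrow> g i \<in> V" "u \<in> V"
  shows "\<exists>p\<in>lin I g. \<forall>w\<in>lin I g. f (\<lambda>t. u t - p t) w = 0"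
  using assms
proof (induction I arbitrary: u rule: finite_induct)
  case empty
  have "lin {} g = {\<lambda>_. 0}" unfolding lin_def by auto
  then show ?case using empty f_zero_right V_diff V_zero by auto
next
  case (insert j I)
  have gI: "\<And>i. i \<in> I \<Longrightarrow> g i \<in> V" using insert by auto
  have gj: "g j \<in> V" using insert by auto
  have linI: "lin I g \<subseteq> V" using lin_V[OF insert(1) gI] .
  have linJ: "lin (insert j I) g \<subseteq> V" using lin_V[of "insert j I" g] insert by auto
  obtain pu where pu: "pu \<in> lin I g" "\<forall>w\<in>lin I g. f (\<lambda>t. u t - pu t) w = 0"
    using insert.IH[OF gI insert.prems(2)] by blast
  obtain pg where pg: "pg \<in> lin I g" "\<forall>w\<in>lin I g. f (\<lambda>t. g j t - pg t) w = 0"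
    using insert.IH[OF gI gj] by blast
  define \<psi> where "\<psi> = (\<lambda>t. g j t - pg t)"
  have puV: "pu \<in> V" and pgV: "pg \<in> V" using pu pg linI by auto
  have psiV: "\<psi> \<in> V" using V_diff[OF gj pgV] by (simp add: \<psi>_def)
  have psi_lin: "\<psi> \<in> lin (insert j I) g"
    using lin_lin[OF lin_gen[of j "insert j I" g] subsetD[OF lin_mono[OF insert(2,1)] pg(1)], of 1 "-1"] insert(1)
    by (simp add: \<psi>_def)
  have uV: "u \<in> V" by fact
  show ?case
  proof (cases "f \<psi> \<psi> = 0")
    case True
    show ?thesis
    proof (intro bexI[of _ pu] ballI)
      show "pu \<in> lin (insert j I) g" using lin_mono[OF insert(2,1)] pu by auto
      fix w assume w: "w \<in> lin (insert j I) g"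
      obtain a z where az: "z \<in> lin I g" "w = (\<lambda>t. a * g j t + z t)" using lin_insert[OF insert(2,1) w] by blast
      have zV: "z \<in> V" using az linI by auto
      have "w = (\<lambda>t. a * \<psi> t + 1 * (a * pg t + z t))" unfolding az \<psi>_def by (simp add: algebra_simps)
      moreover have "(\<lambda>t. a * pg t + z t) \<in> lin I g" using lin_lin[OF pg(1) az(1), of a 1] by simp
      moreover have "f (\<lambda>t. u t - pu t) \<psi> = 0"
        using null_orth[OF psiV V_diff[OF uV puV] True] f_sym psiV V_diff[OF uV puV] by simp
      ultimately show "f (\<lambda>t. u t - pu t) w = 0"
        using pu f_lin V_diff[OF uV puV] psiV linI
        by (simp add: f_add_right f_scale_right V_scale subset_iff)
    qed
  next
    case False
    define \<alpha> where "\<alpha> = f (\<lambda>t. u t - pu t) \<psi> / f \<psi> \<psi>"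
    define p where "p = (\<lambda>t. 1 * pu t + \<alpha> * \<psi> t)"
    have pl: "p \<in> lin (insert j I) g"
      unfolding p_def by (rule lin_lin[OF subsetD[OF lin_mono[OF insert(2,1)] pu(1)] psi_lin])
    have upsi: "f (\<lambda>t. u t - pu t) \<psi> - \<alpha> * f \<psi> \<psi> = 0" using False by (simp add: \<alpha>_def)
    have pz: "f \<psi> z = 0" if "z \<in> lin I g" for z
      using pg that f_sym psiV linI by (auto simp: \<psi>_def)
    have key: "(\<lambda>t. u t - p t) = (\<lambda>t. (u t - pu t) - \<alpha> * \<psi> t)" unfolding p_def by auto
    have upV: "(\<lambda>t. u t - pu t) \<in> V" using V_diff[OF uV puV] .
    have apsi: "(\<lambda>t. \<alpha> * \<psi> t) \<in> V" using V_scale[OF psiV] .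
    show ?thesis
    proof (intro bexI[OF _ pl] ballI)
      fix w assume w: "w \<in> lin (insert j I) g"
      obtain a z where az: "z \<in> lin I g" "w = (\<lambda>t. a * g j t + z t)" using lin_insert[OF insert(2,1) w] by blast
      have zV: "z \<in> V" using az linI by auto
      have z2: "(\<lambda>t. a * pg t + z t) \<in> lin I g" using lin_lin[OF pg(1) az(1), of a 1] by simp
      then have z2V: "(\<lambda>t. a * pg t + z t) \<in> V" using linI by auto
      have weq: "w = (\<lambda>t. a * \<psi> t + 1 * (a * pg t + z t))" unfolding az \<psi>_def by (simp add: algebra_simps)
      have wV: "w \<in> V" using w linJ by auto
      have "f (\<lambda>t. u t - p t) w = f (\<lambda>t. u t - pu t) w - f (\<lambda>t. \<alpha> * \<psi> t) w"
        unfolding key using f_diff_left[OF upV apsi wV] by simp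
      also have "\<dots> = f (\<lambda>t. u t - pu t) w - \<alpha> * f \<psi> w" using f_scale_left[OF psiV wV] by simp
      also have "f (\<lambda>t. u t - pu t) w = a * f (\<lambda>t. u t - pu t) \<psi> + 1 * f (\<lambda>t. u t - pu t) (\<lambda>t. a * pg t + z t)"
        unfolding weq using f_sym[OF upV V_lin[OF psiV z2V], of a 1] f_lin[OF psiV z2V upV, of a 1] f_sym[OF upV psiV] f_sym[OF upV z2V] by simp
      also have "f (\<lambda>t. u t - pu t) (\<lambda>t. a * pg t + z t) = 0" using pu(2) z2 by auto
      also have "f \<psi> w = a * f \<psi> \<psi> + 1 * f \<psi> (\<lambda>t. a * pg t + z t)"
        unfolding weq using f_sym[OF psiV V_lin[OF psiV z2V], of a 1] f_lin[OF psiV z2V psiV, of a 1] f_sym[OF psiV z2V] by simp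
      also have "f \<psi> (\<lambda>t. a * pg t + z t) = 0" using pz[OF z2] .
      finally show "f (\<lambda>t. u t - p t) w = 0" using upsi by (simp add: algebra_simps)
    qed
  qed
qed

end


definition gH :: "(('a\<Rightarrow>real) \<Rightarrow> ('a\<Rightarrow>real) \<Rightarrow> real) \<Rightarrow> (nat \<Rightarrow> 'a \<Rightarrow> real) \<Rightarrow> nat \<Rightarrow> ('a \<Rightarrow> real) \<Rightarrow> nat \<Rightarrow> real" where
  "gH f h N u = (\<lambda>n. if n \<in> {1..N} then f (h n) u else 0)"

definition gC :: "('a \<Rightarrow> real) set \<Rightarrow> (('a\<Rightarrow>real) \<Rightarrow> ('a\<Rightarrow>real) \<Rightarrow> real) \<Rightarrow> (nat \<Rightarrow> 'a \<Rightarrow> real) \<Rightarrow> nat \<Rightarrow> (nat \<Rightarrow> real) \<Rightarrow> ('a \<Rightarrow> real) set" where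
  "gC V f h N \<theta> = {u \<in> V. \<forall>n\<in>{1..N}. f (h n) u = \<theta> n}"

definition gipN :: "(('a\<Rightarrow>real) \<Rightarrow> ('a\<Rightarrow>real) \<Rightarrow> real) \<Rightarrow> (nat \<Rightarrow> 'a \<Rightarrow> real) \<Rightarrow> nat \<Rightarrow> (nat \<Rightarrow> real) \<Rightarrow> (nat \<Rightarrow> real) \<Rightarrow> real" where
  "gipN f h N x y = (\<Sum>n=1..N. x n * y n / (gnrm f (h n))^2)"

definition gnrmN where "gnrmN f h N x = sqrt (gipN f h N x x)"

definition gprojN where
  "gprojN f h N B w = (SOME v. v \<in> gH f h N ` B \<and>
      (\<forall>v'\<in>gH f h N ` B. gnrmN f h N (\<lambda>n. w n - v n) \<le> gnrmN f h N (\<lambda>n. w n - v' n)))"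

definition gHdag where
  "gHdag f h N B w = (SOME u. u \<in> B \<and> gH f h N u = gprojN f h N B w \<and>
      (\<forall>u'\<in>B. gH f h N u' = gprojN f h N B w \<longrightarrow> gnrm f u \<le> gnrm f u'))"

lemma gprojN_alt: "gprojN f h N B w = gproj (gipN f h N) (gH f h N ` B) w"
  unfolding gprojN_def gproj_def gnrmN_def gnrm_def ..

lemma sip_N: "sip UNIV (gipN f h N)"
proof
  fix u v w :: "nat \<Rightarrow> real" and a b :: real
  have "gipN f h N (\<lambda>t. a * u t + b * v t) w = (\<Sum>n=1..N. a * (u n * w n / (gnrm f (h n))^2) + b * (v n * w n / (gnrm f (h n))^2))"
    unfolding gipN_def by (intro sum.cong refl) (simp add: add_divide_distrib distrib_right)
  also have "\<dots> = a * gipN f h N u w + b * gipN f h N v w"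
    unfolding gipN_def by (simp add: sum.distrib sum_distrib_left)
  finally show "gipN f h N (\<lambda>t. a * u t + b * v t) w = a * gipN f h N u w + b * gipN f h N v w" .
  show "gipN f h N u v = gipN f h N v u" unfolding gipN_def by (simp add: mult.commute)
  show "0 \<le> gipN f h N u u" unfolding gipN_def by (intro sum_nonneg) simp
qed auto

locale absetup = sip V f for V :: "('a \<Rightarrow> real) set" and f +
  fixes B :: "('a \<Rightarrow> real) set" and h :: "nat \<Rightarrow> 'a \<Rightarrow> real" and N :: nat and b :: "nat \<Rightarrow> 'a \<Rightarrow> real"
  assumes B_sub: "B \<subseteq> V" and B_zero: "(\<lambda>_. 0) \<in> B"
    and B_lin: "u \<in> B \<Longrightarrow> v \<in> B \<Longrightarrow> (\<lambda>t. a * u t + c * v t) \<in> B"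
    and hV: "n \<in> {1..N} \<Longrightarrow> h n \<in> V"
    and horth: "m \<in> {1..N} \<Longrightarrow> n \<in> {1..N} \<Longrightarrow> m \<noteq> n \<Longrightarrow> f (h m) (h n) = 0"
    and hpos: "n \<in> {1..N} \<Longrightarrow> f (h n) (h n) > 0"
    and bB: "n \<in> {1..N} \<Longrightarrow> b n \<in> B"
    and borth: "n \<in> {1..N} \<Longrightarrow> v \<in> B \<Longrightarrow> f (\<lambda>t. h n t - b n t) v = 0"
begin

abbreviation "g \<equiv> gipN f h N"
abbreviation "Hv \<equiv> gH f h N"
abbreviation "d n \<equiv> f (h n) (h n)"

interpretation NN: sip UNIV g by (rule sip_N)

lemma hh: "m \<in> {1..N} \<Longrightarrow> n \<in> {1..N} \<Longrightarrow> n \<noteq> m \<Longrightarrow> f (h m) (h n) = 0"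
  using horth by auto

lemma BV: "u \<in> B \<Longrightarrow> u \<in> V" using B_sub by auto
lemma bV: "n \<in> {1..N} \<Longrightarrow> b n \<in> V" using bB BV by auto

lemma B_diff: "u \<in> B \<Longrightarrow> v \<in> B \<Longrightarrow> (\<lambda>t. u t - v t) \<in> B"
  using B_lin[of u v 1 "-1"] by simp
lemma B_add: "u \<in> B \<Longrightarrow> v \<in> B \<Longrightarrow> (\<lambda>t. u t + v t) \<in> B"
  using B_lin[of u v 1 1] by simp

lemma B_sum: "finite I \<Longrightarrow> (\<And>i. i \<in> I \<Longrightarrow> u i \<in> B) \<Longrightarrow> (\<lambda>t. \<Sum>i\<in>I. c i * u i t) \<in> B"
proof (induction I rule: finite_induct)
  case empty then show ?case using B_zero by simp
next
  case (insert j I)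
  then have "(\<lambda>t. c j * u j t + 1 * (\<Sum>i\<in>I. c i * u i t)) \<in> B"
    by (intro B_lin) auto
  then show ?case using insert by simp
qed

lemma lin_b_B: "lin {1..N} b \<subseteq> B"
  unfolding lin_def using B_sum[of "{1..N}" b] bB by auto

lemma gnrm_h: "n \<in> {1..N} \<Longrightarrow> (gnrm f (h n))^2 = d n"
  unfolding gnrm_def using hpos[of n] by simp

lemma g_alt: "g x y = (\<Sum>n=1..N. x n * y n / d n)"
  unfolding gipN_def by (intro sum.cong) (auto simp: gnrm_h)

lemma bh: "n \<in> {1..N} \<Longrightarrow> v \<in> B \<Longrightarrow> f (b n) v = f (h n) v"
  using borth[of n v] f_diff_left[OF hV bV BV, of n n v] by simp

lemma H_lin: "u \<in> V \<Longrightarrow> v \<in> V \<Longrightarrow> Hv (\<lambda>t. a * u t + c * v t) = (\<lambda>n. a * Hv u n + c * Hv v n)"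
proof -
  assume u: "u \<in> V" and v: "v \<in> V"
  have "f (h n) (\<lambda>t. a * u t + c * v t) = a * f (h n) u + c * f (h n) v" if n: "n \<in> {1..N}" for n
    using f_sym[OF hV[OF n] V_lin[OF u v]] f_lin[OF u v hV[OF n]] f_sym[OF hV[OF n] u] f_sym[OF hV[OF n] v] by simp
  then show ?thesis unfolding gH_def by auto
qed

lemma H_diff: "u \<in> V \<Longrightarrow> v \<in> V \<Longrightarrow> Hv (\<lambda>t. u t - v t) = (\<lambda>n. Hv u n - Hv v n)"
  using H_lin[of u v 1 "-1"] by simp

lemma H_sum: "finite I \<Longrightarrow> (\<And>i. i \<in> I \<Longrightarrow> u i \<in> V) \<Longrightarrow> Hv (\<lambda>t. \<Sum>i\<in>I. c i * u i t) = (\<lambda>n. \<Sum>i\<in>I. c i * Hv (u i) n)"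
proof -
  assume I: "finite I" "\<And>i. i \<in> I \<Longrightarrow> u i \<in> V"
  have "f (h n) (\<lambda>t. \<Sum>i\<in>I. c i * u i t) = (\<Sum>i\<in>I. c i * f (h n) (u i))" if n: "n \<in> {1..N}" for n
    by (rule f_sum_right[OF I hV[OF n]])
  note H1 = this
  show ?thesis unfolding gH_def
  proof (intro ext)
    fix n
    show "(if n \<in> {1..N} then f (h n) (\<lambda>t. \<Sum>i\<in>I. c i * u i t) else 0) =
      (\<Sum>i\<in>I. c i * (if n \<in> {1..N} then f (h n) (u i) else 0))"
      using H1 by (cases "n \<in> {1..N}") auto
  qed
qed

lemma H_eqv: "eqv u v \<Longrightarrow> u \<in> V \<Longrightarrow> v \<in> V \<Longrightarrow> Hv u = Hv v"
  unfolding gH_def using eqv_f_right hV by auto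

definition Adj :: "(nat \<Rightarrow> real) \<Rightarrow> 'a \<Rightarrow> real" where
  "Adj r = (\<lambda>t. \<Sum>n\<in>{1..N}. (r n / d n) * b n t)"

lemma Adj_B: "Adj r \<in> B" unfolding Adj_def by (rule B_sum) (auto simp: bB)
lemma Adj_V: "Adj r \<in> V" using Adj_B BV by auto

lemma Adj_diff: "Adj (\<lambda>n. r n - s n) = (\<lambda>t. Adj r t - Adj s t)"
  unfolding Adj_def by (auto simp: diff_divide_distrib left_diff_distrib sum_subtractf)

lemma Adj_prop: "v \<in> B \<Longrightarrow> f (Adj r) v = g r (Hv v)"
proof -
  assume v: "v \<in> B"
  have "f (Adj r) v = (\<Sum>n\<in>{1..N}. (r n / d n) * f (b n) v)"
    unfolding Adj_def by (rule f_sum_left) (auto simp: bV BV v)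
  also have "\<dots> = (\<Sum>n\<in>{1..N}. r n * Hv v n / d n)"
    by (intro sum.cong) (auto simp: bh v gH_def)
  finally show ?thesis by (simp add: g_alt)
qed

lemma bessel:
  assumes v: "v \<in> V" shows "g (Hv v) (Hv v) \<le> f v v"
proof -
  define c where "c n = f (h n) v / d n" for n
  define G where "G = (\<lambda>t. \<Sum>n\<in>{1..N}. c n * h n t)"
  have GV: "G \<in> V" unfolding G_def by (rule V_sum) (auto simp: hV)
  define S where "S = (\<Sum>n\<in>{1..N}. (f (h n) v)^2 / d n)"
  have fhG: "f (h m) G = c m * d m" if m: "m \<in> {1..N}" for m
  proof -
    have "f (h m) G = (\<Sum>n\<in>{1..N}. c n * f (h m) (h n))"
      unfolding G_def by (rule f_sum_right) (auto simp: hV m hV[OF m])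
    also have "\<dots> = (\<Sum>n\<in>{1..N}. if n = m then c m * d m else 0)"
      by (intro sum.cong) (use m in \<open>auto simp: hh\<close>)
    finally show ?thesis using m by simp
  qed
  have "f (\<lambda>t. \<Sum>n\<in>{1..N}. c n * h n t) G = (\<Sum>n\<in>{1..N}. c n * f (h n) G)"
    by (rule f_sum_left) (auto simp: hV GV)
  then have "f G G = (\<Sum>n\<in>{1..N}. c n * f (h n) G)" by (simp only: G_def)
  also have "\<dots> = S" unfolding S_def
    by (intro sum.cong) (auto simp: fhG c_def power2_eq_square hpos less_imp_neq[OF hpos, symmetric])
  finally have GG: "f G G = S" .
  have "f v G = (\<Sum>n\<in>{1..N}. c n * f v (h n))"
    unfolding G_def by (rule f_sum_right) (auto simp: hV v)
  also have "\<dots> = S" unfolding S_def c_def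
    by (intro sum.cong) (auto simp: f_sym[OF v hV] power2_eq_square)
  finally have vG: "f v G = S" .
  have "0 \<le> f (\<lambda>t. v t - G t) (\<lambda>t. v t - G t)" by (intro f_pos V_diff v GV)
  also have "\<dots> = f v v - S" using f_expand[OF v GV] GG vG by simp
  finally have "S \<le> f v v" by simp
  moreover have "g (Hv v) (Hv v) = S" unfolding g_alt S_def
    by (intro sum.cong) (auto simp: gH_def power2_eq_square)
  ultimately show ?thesis by simp
qed

definition A :: "(nat \<Rightarrow> real) \<Rightarrow> nat \<Rightarrow> real" where "A r = Hv (Adj r)"

lemma q_eq: "f (Adj r) (Adj r) = g r (A r)"
  unfolding A_def by (rule Adj_prop[OF Adj_B])

lemma step_ineq: "g (\<lambda>n. r n - A r n) (\<lambda>n. r n - A r n) \<le> g r r - f (Adj r) (Adj r)"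
proof -
  have "g (\<lambda>n. r n - A r n) (\<lambda>n. r n - A r n) = g r r - 2 * g r (A r) + g (A r) (A r)"
    by (rule NN.f_expand) auto
  moreover have "g (A r) (A r) \<le> f (Adj r) (Adj r)" unfolding A_def by (rule bessel[OF Adj_V])
  ultimately show ?thesis using q_eq[of r] by simp
qed

lemma ranH_lin: "Hv ` B = lin {1..N} (\<lambda>n. Hv (b n))"
proof
  show "Hv ` B \<subseteq> lin {1..N} (\<lambda>n. Hv (b n))"
  proof
    fix y assume "y \<in> Hv ` B"
    then obtain v where v: "v \<in> B" "y = Hv v" by auto
    obtain P where P: "P \<in> lin {1..N} b" "\<forall>w\<in>lin {1..N} b. f (\<lambda>t. v t - P t) w = 0"
      using gs[of "{1..N}" b v] bV BV v by auto
    have PB: "P \<in> B" using P lin_b_B by auto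
    have "Hv v = Hv P"
    proof
      fix n show "Hv v n = Hv P n"
      proof (cases "n \<in> {1..N}")
        case True
        have "f (h n) v - f (h n) P = f (h n) (\<lambda>t. v t - P t)"
          using f_diff_right[OF BV BV hV, OF v(1) PB True] by simp
        also have "\<dots> = f (b n) (\<lambda>t. v t - P t)" using bh[OF True B_diff[OF v(1) PB]] by simp
        also have "\<dots> = f (\<lambda>t. v t - P t) (b n)" using f_sym[OF bV V_diff] True BV v PB by auto
        also have "\<dots> = 0" using P(2) lin_gen[of n "{1..N}" b] True by auto
        finally show ?thesis unfolding gH_def using True by simp
      qed (auto simp: gH_def)
    qed
    obtain c where c: "P = (\<lambda>t. \<Sum>n\<in>{1..N}. c n * b n t)" using P(1) unfolding lin_def by auto
    have "Hv P = (\<lambda>m. \<Sum>n\<in>{1..N}. c n * Hv (b n) m)" unfolding c by (rule H_sum) (auto simp: bV)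
    then show "y \<in> lin {1..N} (\<lambda>n. Hv (b n))" unfolding lin_def v(2) \<open>Hv v = Hv P\<close>
      by (intro CollectI exI[of _ c])
  qed
next
  show "lin {1..N} (\<lambda>n. Hv (b n)) \<subseteq> Hv ` B"
  proof
    fix y assume "y \<in> lin {1..N} (\<lambda>n. Hv (b n))"
    then obtain c where c: "y = (\<lambda>m. \<Sum>n\<in>{1..N}. c n * Hv (b n) m)" unfolding lin_def by auto
    have "y = Hv (\<lambda>t. \<Sum>n\<in>{1..N}. c n * b n t)" unfolding c by (rule H_sum[symmetric]) (auto simp: bV)
    moreover have "(\<lambda>t. \<Sum>n\<in>{1..N}. c n * b n t) \<in> B" by (rule B_sum) (auto simp: bB)
    ultimately show "y \<in> Hv ` B" by blast
  qed
qed

lemma ranH_diff: "y \<in> Hv ` B \<Longrightarrow> z \<in> Hv ` B \<Longrightarrow> (\<lambda>n. y n - z n) \<in> Hv ` B"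
  using lin_lin[of y "{1..N}" "\<lambda>n. Hv (b n)" z 1 "-1"] unfolding ranH_lin[symmetric] by simp

lemma projN_char:
  "gprojN f h N B e \<in> Hv ` B \<and> (\<forall>y\<in>Hv ` B. g (\<lambda>n. e n - gprojN f h N B e n) y = 0)"
proof -
  obtain p where p: "p \<in> lin {1..N} (\<lambda>n. Hv (b n))" "\<forall>w\<in>lin {1..N} (\<lambda>n. Hv (b n)). g (\<lambda>t. e t - p t) w = 0"
    using NN.gs[of "{1..N}" "\<lambda>n. Hv (b n)" e] by auto
  have pr: "p \<in> Hv ` B" using p ranH_lin by auto
  have ch: "gproj g (Hv ` B) e \<in> Hv ` B \<and> NN.eqv (gproj g (Hv ` B) e) p"
    by (rule NN.proj_char[OF _ _ pr]) (use p ranH_diff pr ranH_lin in auto)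
  define eb where "eb = gproj g (Hv ` B) e"
  have "NN.eqv (\<lambda>n. e n - eb n) (\<lambda>n. e n - p n)"
    using NN.eqv_diff[OF NN.eqv_refl] ch unfolding eb_def by auto
  then have "g (\<lambda>n. e n - eb n) y = 0" if "y \<in> Hv ` B" for y
    using NN.eqv_f[of "\<lambda>n. e n - eb n" "\<lambda>n. e n - p n" y] p(2) that ranH_lin by auto
  then show ?thesis using ch unfolding gprojN_alt eb_def by auto
qed

lemma gnrmN_sq: "(gnrmN f h N x)^2 = g x x"
  unfolding gnrmN_def using NN.f_pos[of x] by simp

end


context absetup begin

interpretation NN: sip UNIV g by (rule sip_N)

lemma H_zero: "Hv (\<lambda>_. 0) = (\<lambda>_. 0)"
  unfolding gH_def using f_zero_right hV by auto

theorem abstract_main: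
  fixes x :: "'a \<Rightarrow> real" and e :: "nat \<Rightarrow> real"
  assumes xB: "x \<in> B"
  defines "\<theta>0 \<equiv> Hv x"
    and "\<theta> \<equiv> (\<lambda>n. Hv x n - e n)"
    and "ebar \<equiv> gprojN f h N B e"
  shows "(\<lambda>k. gnrm f
            (\<lambda>s. ((gproj f B \<circ> gproj f (gC V f h N \<theta>)) ^^ k) (\<lambda>_. 0) s
                 - gHdag f h N B (\<lambda>n. \<theta>0 n - ebar n) s)) \<longlonglongrightarrow> 0
       \<and> (gnrmN f h N ebar)^2 + (gnrmN f h N (\<lambda>n. e n - ebar n))^2 = (gnrmN f h N e)^2
       \<and> gnrmN f h N ebar \<le> gnrmN f h N e"
proof -
  have eb: "ebar \<in> Hv ` B" "\<And>y. y \<in> Hv ` B \<Longrightarrow> g (\<lambda>n. e n - ebar n) y = 0"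
    using projN_char[of e] unfolding ebar_def by auto
  have cross: "g ebar (\<lambda>n. e n - ebar n) = 0"
    using eb NN.f_sym[of ebar "\<lambda>n. e n - ebar n"] by auto
  have pyth: "g e e = g ebar ebar + g (\<lambda>n. e n - ebar n) (\<lambda>n. e n - ebar n)"
    using NN.f_expand_add[of ebar "\<lambda>n. e n - ebar n"] cross by simp
  have part2: "(gnrmN f h N ebar)^2 + (gnrmN f h N (\<lambda>n. e n - ebar n))^2 = (gnrmN f h N e)^2"
    unfolding gnrmN_sq using pyth by simp
  have part3: "gnrmN f h N ebar \<le> gnrmN f h N e"
    unfolding gnrmN_def using pyth NN.f_pos[of "\<lambda>n. e n - ebar n"] by (intro real_sqrt_le_mono) simp
  have th0: "\<theta>0 \<in> Hv ` B" unfolding \<theta>0_def using xB by auto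
  define tb where "tb = gprojN f h N B (\<lambda>n. \<theta>0 n - ebar n)"
  have dB: "(\<lambda>n. \<theta>0 n - ebar n) \<in> Hv ` B" by (rule ranH_diff[OF th0 eb(1)])
  have tbc: "tb \<in> Hv ` B" "\<And>y. y \<in> Hv ` B \<Longrightarrow> g (\<lambda>n. (\<theta>0 n - ebar n) - tb n) y = 0"
    using projN_char[of "\<lambda>n. \<theta>0 n - ebar n"] unfolding tb_def by auto
  have tb_orth: "g (\<lambda>n. \<theta> n - tb n) y = 0" if y: "y \<in> Hv ` B" for y
  proof -
    have "(\<lambda>n. \<theta> n - tb n) = (\<lambda>n. 1 * ((\<theta>0 n - ebar n) - tb n) + (-1) * (e n - ebar n))"
      unfolding \<theta>_def \<theta>0_def by (auto simp: algebra_simps)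
    then have "g (\<lambda>n. \<theta> n - tb n) y = 1 * g (\<lambda>n. (\<theta>0 n - ebar n) - tb n) y + (-1) * g (\<lambda>n. e n - ebar n) y"
      using NN.f_lin[of "\<lambda>n. (\<theta>0 n - ebar n) - tb n" "\<lambda>n. e n - ebar n" y 1 "-1"] by simp
    then show ?thesis using tbc(2)[OF y] eb(2)[OF y] by simp
  qed
  obtain v0 where v0: "v0 \<in> B" "tb = Hv v0" using tbc(1) by auto
  obtain P where P: "P \<in> lin {1..N} b" "\<forall>w\<in>lin {1..N} b. f (\<lambda>t. v0 t - P t) w = 0"
    using gs[of "{1..N}" b v0] bV BV v0 by auto
  have PB: "P \<in> B" using P lin_b_B by auto
  have HP: "Hv P = tb"
  proof
    fix n show "Hv P n = tb n"
    proof (cases "n \<in> {1..N}")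
      case True
      have "f (h n) v0 - f (h n) P = f (h n) (\<lambda>t. v0 t - P t)"
        using f_diff_right[OF BV BV hV, OF v0(1) PB True] by simp
      also have "\<dots> = f (b n) (\<lambda>t. v0 t - P t)" using bh[OF True B_diff[OF v0(1) PB]] by simp
      also have "\<dots> = f (\<lambda>t. v0 t - P t) (b n)" using f_sym[OF bV V_diff] True BV v0 PB by auto
      also have "\<dots> = 0" using P(2) lin_gen[of n "{1..N}" b] True by auto
      finally show ?thesis unfolding v0(2) gH_def using True by simp
    qed (auto simp: v0(2) gH_def)
  qed
  obtain c where c: "P = (\<lambda>t. \<Sum>n\<in>{1..N}. c n * b n t)" using P(1) unfolding lin_def by auto
  define rs where "rs n = c n * d n" for n
  have P_Adj: "P = Adj rs" unfolding c Adj_def rs_def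
    by (intro ext sum.cong refl) (use hpos in \<open>auto simp: less_imp_neq[symmetric]\<close>)
  have minnorm: "f u u = f P P + f (\<lambda>t. u t - P t) (\<lambda>t. u t - P t)" if u: "u \<in> B" "Hv u = Hv P" for u
  proof -
    have uV: "u \<in> V" using u BV by auto
    have PV: "P \<in> V" using PB BV by auto
    have "Hv (\<lambda>t. u t - P t) = (\<lambda>_. 0)" using H_diff[OF uV PV] u(2) by auto
    then have "f P (\<lambda>t. u t - P t) = 0"
      using Adj_prop[OF B_diff[OF u(1) PB], of rs] P_Adj by (simp add: g_alt)
    then show ?thesis
      using f_expand_add[OF PV V_diff[OF uV PV]] by simp
  qed
  define ustar where "ustar = gHdag f h N B (\<lambda>n. \<theta>0 n - ebar n)"
  have exH: "\<exists>u. u \<in> B \<and> Hv u = tb \<and> (\<forall>u'\<in>B. Hv u' = tb \<longrightarrow> gnrm f u \<le> gnrm f u')"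
  proof (intro exI[of _ P] conjI ballI impI)
    fix u' assume "u' \<in> B" "Hv u' = tb"
    then have "f u' u' = f P P + f (\<lambda>t. u' t - P t) (\<lambda>t. u' t - P t)" using minnorm HP by auto
    moreover have "0 \<le> f (\<lambda>t. u' t - P t) (\<lambda>t. u' t - P t)" using \<open>u' \<in> B\<close> PB BV V_diff f_pos by auto
    ultimately show "gnrm f P \<le> gnrm f u'" unfolding gnrm_def by (intro real_sqrt_le_mono) simp
  qed (use PB HP in auto)
  have us: "ustar \<in> B" "Hv ustar = tb" "\<forall>u'\<in>B. Hv u' = tb \<longrightarrow> gnrm f ustar \<le> gnrm f u'"
    using someI_ex[OF exH] unfolding ustar_def gHdag_def tb_def by blast+
  have usV: "ustar \<in> V" and PV: "P \<in> V" using us PB BV by auto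
  have "gnrm f ustar \<le> gnrm f P" using us PB HP by auto
  then have "f ustar ustar \<le> f P P" unfolding gnrm_def using f_pos usV PV by simp
  then have "f (\<lambda>t. ustar t - P t) (\<lambda>t. ustar t - P t) \<le> 0" using minnorm[OF us(1)] us(2) HP by simp
  then have us_eqv: "eqv ustar P" unfolding eqv_def using f_pos[OF V_diff[OF usV PV]] by simp
  define C where "C = gC V f h N \<theta>"
  have CV: "C \<subseteq> V" unfolding C_def gC_def by auto
  define F where "F = gproj f B \<circ> gproj f C"
  define w where "w k = ((\<lambda>u. (\<lambda>t. u t + Adj (\<lambda>n. \<theta> n - Hv u n) t)) ^^ k) (\<lambda>_. 0)" for k
  have w0: "w 0 = (\<lambda>_. 0)" and wS: "w (Suc k) = (\<lambda>t. w k t + Adj (\<lambda>n. \<theta> n - Hv (w k) n) t)" for k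
    unfolding w_def by auto
  have wB: "w k \<in> B" for k
    by (induction k) (auto simp: w0 wS B_zero intro: B_add Adj_B)
  have iter: "(F ^^ k) (\<lambda>_. 0) \<in> B \<and> eqv ((F ^^ k) (\<lambda>_. 0)) (w k)" for k
  proof (induction k)
    case 0 show ?case using B_zero eqv_refl V_zero by (simp add: w0)
  next
    case (Suc k)
    define u where "u = (F ^^ k) (\<lambda>_. 0)"
    have uB: "u \<in> B" and ueq: "eqv u (w k)" using Suc unfolding u_def by auto
    have uV: "u \<in> V" and wV: "w k \<in> V" using uB wB BV by auto
    define cc where "cc n = (\<theta> n - Hv (w k) n) / d n" for n
    define g1 where "g1 = (\<lambda>t. w k t + (\<Sum>n\<in>{1..N}. cc n * h n t))"
    have sumV: "(\<lambda>t. \<Sum>n\<in>{1..N}. cc n * h n t) \<in> V" by (rule V_sum) (auto simp: hV)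
    have g1V: "g1 \<in> V" unfolding g1_def by (rule V_add[OF wV sumV])
    have fhg1: "f (h m) z = (\<Sum>n\<in>{1..N}. cc n * f (h n) z) + f (h m) z - (\<Sum>n\<in>{1..N}. cc n * f (h n) z)" for m z
      by simp
    have fg1: "f g1 z = f (w k) z + (\<Sum>n\<in>{1..N}. cc n * f (h n) z)" if z: "z \<in> V" for z
      unfolding g1_def using f_add_left[OF wV sumV z] f_sum_left[of "{1..N}" h z cc] hV z by auto
    have g1C: "g1 \<in> C"
    proof -
      have "f (h m) g1 = \<theta> m" if m: "m \<in> {1..N}" for m
      proof -
        have "f (h m) g1 = f g1 (h m)" using f_sym[OF hV[OF m] g1V] .
        also have "\<dots> = f (w k) (h m) + (\<Sum>n\<in>{1..N}. cc n * f (h n) (h m))" using fg1[OF hV[OF m]] .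
        also have "(\<Sum>n\<in>{1..N}. cc n * f (h n) (h m)) = (\<Sum>n\<in>{1..N}. if n = m then cc m * d m else 0)"
          by (intro sum.cong) (use m in \<open>auto simp: horth\<close>)
        also have "\<dots> = cc m * d m" using m by simp
        also have "cc m * d m = \<theta> m - Hv (w k) m" unfolding cc_def using hpos[OF m] by simp
        also have "Hv (w k) m = f (h m) (w k)" using m by (simp add: gH_def)
        also have "f (w k) (h m) = f (h m) (w k)" using f_sym[OF wV hV[OF m]] .
        finally show ?thesis by simp
      qed
      then show ?thesis unfolding C_def gC_def using g1V by auto
    qed
    have pc: "gproj f C u \<in> C \<and> eqv (gproj f C u) g1"
    proof (rule proj_char[OF CV uV g1C])
      fix z assume zC: "z \<in> C"
      have zV: "z \<in> V" using zC CV by auto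
      have dV: "(\<lambda>t. g1 t - z t) \<in> V" using V_diff[OF g1V zV] .
      have hz: "f (h n) (\<lambda>t. g1 t - z t) = 0" if n: "n \<in> {1..N}" for n
        using g1C zC n f_diff_right[OF g1V zV hV[OF n]] unfolding C_def gC_def by auto
      have "eqv (\<lambda>t. u t - g1 t) (\<lambda>t. w k t - g1 t)" by (rule eqv_diff[OF ueq eqv_refl[OF g1V] uV wV g1V g1V])
      then have "f (\<lambda>t. u t - g1 t) (\<lambda>t. g1 t - z t) = f (\<lambda>t. w k t - g1 t) (\<lambda>t. g1 t - z t)"
        using eqv_f V_diff uV wV g1V dV by blast
      also have "\<dots> = f (w k) (\<lambda>t. g1 t - z t) - f g1 (\<lambda>t. g1 t - z t)" by (rule f_diff_left[OF wV g1V dV])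
      also have "\<dots> = 0" using fg1[OF dV] hz by simp
      finally show "f (\<lambda>t. u t - g1 t) (\<lambda>t. g1 t - z t) = 0" .
    qed
    define pcu where "pcu = gproj f C u"
    have pcuV: "pcu \<in> V" using pc CV unfolding pcu_def by auto
    have pcueq: "eqv pcu g1" using pc unfolding pcu_def by auto
    have p1B: "w (Suc k) \<in> B" by (rule wB)
    have p1V: "w (Suc k) \<in> V" using p1B BV by auto
    have Adjc: "Adj (\<lambda>n. \<theta> n - Hv (w k) n) = (\<lambda>t. \<Sum>n\<in>{1..N}. cc n * b n t)"
      unfolding Adj_def cc_def by simp
    have fp1: "f (w (Suc k)) z = f (w k) z + (\<Sum>n\<in>{1..N}. cc n * f (b n) z)" if z: "z \<in> V" for z
    proof -
      have bs: "(\<lambda>t. \<Sum>n\<in>{1..N}. cc n * b n t) \<in> V" by (rule V_sum) (auto simp: bV)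
      show ?thesis unfolding wS Adjc using f_add_left[OF wV bs z] f_sum_left[of "{1..N}" b z cc] bV z by auto
    qed
    have pb: "gproj f B pcu \<in> B \<and> eqv (gproj f B pcu) (w (Suc k))"
    proof (rule proj_char[OF B_sub pcuV p1B])
      fix z assume zB: "z \<in> B"
      have dB: "(\<lambda>t. w (Suc k) t - z t) \<in> B" using B_diff[OF p1B zB] .
      have dV: "(\<lambda>t. w (Suc k) t - z t) \<in> V" using dB BV by auto
      have "eqv (\<lambda>t. pcu t - w (Suc k) t) (\<lambda>t. g1 t - w (Suc k) t)"
        by (rule eqv_diff[OF pcueq eqv_refl[OF p1V] pcuV g1V p1V p1V])
      then have "f (\<lambda>t. pcu t - w (Suc k) t) (\<lambda>t. w (Suc k) t - z t) = f (\<lambda>t. g1 t - w (Suc k) t) (\<lambda>t. w (Suc k) t - z t)"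
        using eqv_f V_diff pcuV g1V p1V dV by blast
      also have "\<dots> = f g1 (\<lambda>t. w (Suc k) t - z t) - f (w (Suc k)) (\<lambda>t. w (Suc k) t - z t)"
        by (rule f_diff_left[OF g1V p1V dV])
      also have "\<dots> = 0" using fg1[OF dV] fp1[OF dV] bh[OF _ dB] by simp
      finally show "f (\<lambda>t. pcu t - w (Suc k) t) (\<lambda>t. w (Suc k) t - z t) = 0" .
    qed
    have "(F ^^ Suc k) (\<lambda>_. 0) = gproj f B pcu" unfolding pcu_def u_def F_def by simp
    then show ?case using pb by simp
  qed
  define r where "r k = ((\<lambda>s. (\<lambda>n. s n - A s n)) ^^ k) (\<lambda>n. - rs n)" for k
  have r0: "r 0 = (\<lambda>n. - rs n)" and rS: "r (Suc k) = (\<lambda>n. r k n - A (r k) n)" for k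
    unfolding r_def by auto
  have adj_null: "f (Adj (\<lambda>n. \<theta> n - tb n)) (Adj (\<lambda>n. \<theta> n - tb n)) = 0"
    using Adj_prop[OF Adj_B] tb_orth[OF imageI[OF Adj_B]] by simp
  have Adj_neg: "Adj (\<lambda>n. - rs n) = (\<lambda>t. - Adj rs t)"
    unfolding Adj_def by (auto simp: sum_negf[symmetric])
  have err: "eqv (\<lambda>t. w k t - P t) (Adj (r k))" for k
  proof (induction k)
    case 0 show ?case unfolding w0 r0 Adj_neg P_Adj[symmetric] using eqv_refl V_diff[OF V_zero PV] by simp
  next
    case (Suc k)
    have wV: "w k \<in> V" using wB BV by auto
    define ek where "ek = (\<lambda>t. w k t - P t)"
    have ekV: "ek \<in> V" unfolding ek_def using V_diff[OF wV PV] .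
    have wk: "w k = (\<lambda>t. P t + ek t)" unfolding ek_def by auto
    have Hw: "Hv (w k) = (\<lambda>n. tb n + Hv ek n)"
      using H_lin[OF PV ekV, of 1 1] HP wk by simp
    have Hek: "Hv ek = A (r k)" unfolding A_def using H_eqv[OF Suc[folded ek_def] ekV Adj_V] .
    have "(\<lambda>n. \<theta> n - Hv (w k) n) = (\<lambda>n. (\<theta> n - tb n) - A (r k) n)" unfolding Hw Hek by auto
    then have "Adj (\<lambda>n. \<theta> n - Hv (w k) n) = (\<lambda>t. Adj (\<lambda>n. \<theta> n - tb n) t - Adj (A (r k)) t)"
      by (simp add: Adj_diff)
    then have eS: "(\<lambda>t. w (Suc k) t - P t) = (\<lambda>t. (ek t + Adj (\<lambda>n. \<theta> n - tb n) t) - Adj (A (r k)) t)"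
      unfolding wS ek_def by auto
    have z: "eqv (Adj (\<lambda>n. \<theta> n - tb n)) (\<lambda>_. 0)"
      unfolding eqv_def using adj_null by simp
    have e1: "eqv (\<lambda>t. ek t + Adj (\<lambda>n. \<theta> n - tb n) t) (\<lambda>t. Adj (r k) t + 0)"
      by (rule eqv_add[OF Suc[folded ek_def] z ekV Adj_V Adj_V V_zero])
    have e2: "eqv (\<lambda>t. (ek t + Adj (\<lambda>n. \<theta> n - tb n) t) - Adj (A (r k)) t) (\<lambda>t. (Adj (r k) t + 0) - Adj (A (r k)) t)"
      by (rule eqv_diff[OF e1 eqv_refl[OF Adj_V]]) (use V_add[OF ekV Adj_V] V_add[OF Adj_V V_zero] Adj_V in auto)
    have "(\<lambda>t. (Adj (r k) t + 0) - Adj (A (r k)) t) = Adj (r (Suc k))"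
      unfolding rS Adj_diff by simp
    then show ?case using e2 eS by simp
  qed
  define a where "a k = g (r k) (r k)" for k
  define q where "q k = f (Adj (r k)) (Adj (r k))" for k
  have q0: "q k \<ge> 0" for k unfolding q_def by (rule f_pos[OF Adj_V])
  have a0: "a k \<ge> 0" for k unfolding a_def by (rule NN.f_pos) simp
  have aS: "a (Suc k) \<le> a k - q k" for k unfolding a_def q_def rS by (rule step_ineq)
  have dec: "decseq a" using aS q0 by (intro decseq_SucI) (smt (verit))
  obtain L where L: "a \<longlonglongrightarrow> L"
    using decseq_convergent[OF dec, of 0] a0 by blast
  have "(\<lambda>k. a k - a (Suc k)) \<longlonglongrightarrow> L - L"
    by (intro tendsto_diff L LIMSEQ_Suc[OF L])
  then have ad: "(\<lambda>k. a k - a (Suc k)) \<longlonglongrightarrow> 0" by simp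
  have qlim: "q \<longlonglongrightarrow> 0"
    by (rule tendsto_sandwich[of "\<lambda>_. 0" q sequentially "\<lambda>k. a k - a (Suc k)"])
       (use q0 aS ad in \<open>auto intro!: always_eventually\<close>, smt (verit) aS)
  have main: "f (\<lambda>s. (F ^^ k) (\<lambda>_. 0) s - ustar s) (\<lambda>s. (F ^^ k) (\<lambda>_. 0) s - ustar s) = q k" for k
  proof -
    have iB: "(F ^^ k) (\<lambda>_. 0) \<in> B" using iter by auto
    have iV: "(F ^^ k) (\<lambda>_. 0) \<in> V" using iB BV by auto
    have wV: "w k \<in> V" using wB BV by auto
    have "eqv (\<lambda>s. (F ^^ k) (\<lambda>_. 0) s - ustar s) (\<lambda>t. w k t - P t)"
      by (rule eqv_diff[OF conjunct2[OF iter] us_eqv iV wV usV PV])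
    moreover have "eqv (\<lambda>t. w k t - P t) (Adj (r k))" by (rule err)
    ultimately have "eqv (\<lambda>s. (F ^^ k) (\<lambda>_. 0) s - ustar s) (Adj (r k))"
      using eqv_trans V_diff iV usV wV PV Adj_V by blast
    then show ?thesis unfolding q_def using eqv_norm V_diff[OF iV usV] Adj_V by blast
  qed
  have part1: "(\<lambda>k. gnrm f (\<lambda>s. (F ^^ k) (\<lambda>_. 0) s - ustar s)) \<longlonglongrightarrow> 0"
    unfolding gnrm_def main using tendsto_real_sqrt[OF qlim] by simp
  show ?thesis using part1 part2 part3 unfolding F_def C_def ustar_def by simp
qed

end


lemma abs_mult_le_sq: "\<bar>a * b\<bar> \<le> a^2 + b^2" for a b :: real
proof -
  have "0 \<le> (\<bar>a\<bar> - \<bar>b\<bar>)^2" by simp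
  then have "2*(\<bar>a\<bar>*\<bar>b\<bar>) \<le> \<bar>a\<bar>^2 + \<bar>b\<bar>^2" by (simp add: power2_eq_square algebra_simps)
  moreover have "0 \<le> \<bar>a\<bar>*\<bar>b\<bar>" by simp
  ultimately have "\<bar>a\<bar>*\<bar>b\<bar> \<le> a^2 + b^2" using power2_abs[of a] power2_abs[of b] by linarith
  then show ?thesis by (simp add: abs_mult)
qed

lemma L2_meas: "u \<in> L2 D \<Longrightarrow> u \<in> borel_measurable lborel" unfolding L2_def by auto
lemma L2_int: "u \<in> L2 D \<Longrightarrow> set_integrable lborel D (\<lambda>t. (u t)^2)" unfolding L2_def by auto

lemma L2_prod:
  assumes D: "D \<in> sets lborel" and u: "u \<in> L2 D" and v: "v \<in> L2 D"
  shows "set_integrable lborel D (\<lambda>t. u t * v t)"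
proof (rule set_integrable_bound[of _ _ "\<lambda>t. (u t)^2 + (v t)^2"])
  show "set_integrable lborel D (\<lambda>t. (u t)^2 + (v t)^2)"
    using L2_int[OF u] L2_int[OF v] by (rule set_integral_add)
  have "u \<in> borel_measurable lborel" "v \<in> borel_measurable lborel" using u v L2_meas by auto
  then show "set_borel_measurable lborel D (\<lambda>t. u t * v t)"
    unfolding set_borel_measurable_def using D by measurable
  show "AE x\<in>D in lborel. norm (u x * v x) \<le> norm ((u x)^2 + (v x)^2)"
    using abs_mult_le_sq by auto
qed

lemma sip_L2:
  assumes D: "D \<in> sets lborel"
  shows "sip (L2 D) (ip D)"
proof
  show "(\<lambda>_. 0) \<in> L2 D" unfolding L2_def by (simp add: set_integrable_def)
  fix u v w :: "real \<Rightarrow> real" and a b :: real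
  assume u: "u \<in> L2 D" and v: "v \<in> L2 D"
  have mu: "u \<in> borel_measurable lborel" and mv: "v \<in> borel_measurable lborel" using u v L2_meas by auto
  have "set_integrable lborel D (\<lambda>t. (a^2) * (u t)^2 + ((2*a*b) * (u t * v t) + (b^2) * (v t)^2))"
    by (intro set_integral_add set_integrable_mult_right L2_int u v L2_prod[OF D u v])
  moreover have "(\<lambda>t. (a * u t + b * v t)^2) = (\<lambda>t. (a^2) * (u t)^2 + ((2*a*b) * (u t * v t) + (b^2) * (v t)^2))"
    by (auto simp: power2_eq_square algebra_simps)
  ultimately show "(\<lambda>t. a * u t + b * v t) \<in> L2 D" unfolding L2_def using mu mv by auto
  show "ip D u v = ip D v u" unfolding ip_def by (simp add: mult.commute)
  show "0 \<le> ip D u u" unfolding ip_def set_lebesgue_integral_def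
    by (intro integral_nonneg_AE) (auto simp: indicator_def)
  assume w: "w \<in> L2 D"
  have "ip D (\<lambda>t. a * u t + b * v t) w = (LINT t:D|lborel. a * (u t * w t) + b * (v t * w t))"
    unfolding ip_def by (simp add: algebra_simps)
  also have "\<dots> = (LINT t:D|lborel. a * (u t * w t)) + (LINT t:D|lborel. b * (v t * w t))"
    by (intro set_integral_add set_integrable_mult_right L2_prod[OF D u w] L2_prod[OF D v w])
  also have "\<dots> = a * ip D u w + b * ip D v w" unfolding ip_def by (simp add: set_integral_mult_right)
  finally show "ip D (\<lambda>t. a * u t + b * v t) w = a * ip D u w + b * ip D v w" .
qed


lemma tt_strict:
  assumes tm: "\<And>n. n < N \<Longrightarrow> tt n < tt (Suc n)"
  shows "i < j \<Longrightarrow> j \<le> N \<Longrightarrow> (tt i :: real) < tt j"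
proof (induction j)
  case 0 then show ?case by simp
next
  case (Suc j)
  show ?case
  proof (cases "i = j")
    case True then show ?thesis using tm Suc by auto
  next
    case False then have "tt i < tt j" using Suc by auto
    also have "tt j < tt (Suc j)" using tm Suc by auto
    finally show ?thesis .
  qed
qed

lemma tt_mono:
  assumes tm: "\<And>n. n < N \<Longrightarrow> tt n < tt (Suc n)"
  shows "i \<le> j \<Longrightarrow> j \<le> N \<Longrightarrow> (tt i :: real) \<le> tt j"
  using tt_strict[of N tt, OF tm, of i j] by (cases "i = j") auto

lemma dset_sets: "dset dm \<in> sets lborel" by (cases dm) auto

lemma interval_in_D:
  assumes tm: "\<And>n. n < N \<Longrightarrow> tt n < tt (Suc n)" and t0: "tt 0 = 0" and tN: "tt N \<in> dset dm"
    and n: "n \<in> {1..N}"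
  shows "{tt (n-1)..tt n} \<subseteq> dset dm"
proof (cases dm)
  case RealLine then show ?thesis by simp
next
  case (Interval T)
  have "0 \<le> tt (n-1)" using tt_mono[of N tt, OF tm, of 0 "n-1"] t0 n by auto
  moreover have "tt n \<le> tt N" using tt_mono[of N tt, OF tm, of n N] n by auto
  ultimately show ?thesis using tN Interval by auto
qed

lemma hfun_meas[measurable]: "hfun \<alpha> tt n \<in> borel_measurable lborel"
  unfolding hfun_def by measurable

lemma hfun_nonneg: "0 \<le> hfun \<alpha> tt n s" unfolding hfun_def by (simp add: indicator_def)

lemma hfun_le1: "\<alpha> \<ge> 0 \<Longrightarrow> hfun \<alpha> tt n s \<le> indicator {tt (n-1)..tt n} s"
  unfolding hfun_def by (auto simp: indicator_def mult_nonneg_nonneg)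

lemma hfun_zero: "s \<notin> {tt (n-1)..<tt n} \<Longrightarrow> hfun \<alpha> tt n s = 0"
  unfolding hfun_def by simp

lemma hfun_L2:
  assumes "\<alpha> \<ge> 0" and that: "D \<in> sets lborel" shows "hfun \<alpha> tt n \<in> L2 D"
proof -
  have "integrable lborel (\<lambda>x. indicator D x *\<^sub>R (hfun \<alpha> tt n x)^2)"
  proof (rule Bochner_Integration.integrable_bound[OF integrable_real_indicator[of "{tt (n-1)..tt n}"]])
    show "{tt (n-1)..tt n} \<in> sets lborel" by simp
    show "emeasure lborel {tt (n-1)..tt n} < \<infinity>" by (simp add: emeasure_lborel_Icc_eq)
    show "(\<lambda>x. indicator D x *\<^sub>R (hfun \<alpha> tt n x)^2) \<in> borel_measurable lborel" using that by measurable
    have "norm (indicator D x *\<^sub>R (hfun \<alpha> tt n x)^2) \<le> norm (indicator {tt (n-1)..tt n} x :: real)" for x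
    proof -
      have "0 \<le> hfun \<alpha> tt n x" "hfun \<alpha> tt n x \<le> indicator {tt (n-1)..tt n} x"
        using hfun_nonneg hfun_le1[OF assms(1)] by auto
      then have "(hfun \<alpha> tt n x)^2 \<le> indicator {tt (n-1)..tt n} x"
        by (auto simp: indicator_def power2_eq_square mult_le_one)
      then show ?thesis by (auto simp: indicator_def)
    qed
    then show "AE x in lborel. norm (indicator D x *\<^sub>R (hfun \<alpha> tt n x)^2) \<le> norm (indicator {tt (n-1)..tt n} x :: real)"
      by auto
  qed
  then show ?thesis unfolding L2_def set_integrable_def by auto
qed

lemma hfun_orth:
  assumes tm: "\<And>n. n < N \<Longrightarrow> tt n < tt (Suc n)"
    and m: "m \<in> {1..N}" and n: "n \<in> {1..N}" and mn: "m \<noteq> n"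
  shows "ip D (hfun \<alpha> tt m) (hfun \<alpha> tt n) = 0"
proof -
  have z: "hfun \<alpha> tt m s * hfun \<alpha> tt n s = 0" for s
  proof (cases "m < n")
    case True
    have "tt m \<le> tt (n-1)" using tt_mono[of N tt, OF tm, of m "n-1"] True n by auto
    then have "s \<notin> {tt (m-1)..<tt m} \<or> s \<notin> {tt (n-1)..<tt n}" by auto
    then show ?thesis using hfun_zero by auto
  next
    case False then have "n < m" using mn by auto
    have "tt n \<le> tt (m-1)" using tt_mono[of N tt, OF tm, of n "m-1"] \<open>n < m\<close> m by auto
    then have "s \<notin> {tt (m-1)..<tt m} \<or> s \<notin> {tt (n-1)..<tt n}" by auto
    then show ?thesis using hfun_zero by auto
  qed
  show ?thesis unfolding ip_def z by simp
qed

lemma hfun_pos: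
  assumes tm: "\<And>n. n < N \<Longrightarrow> tt n < tt (Suc n)" and t0: "tt 0 = 0" and tN: "tt N \<in> dset dm"
    and n: "n \<in> {1..N}" and al: "\<alpha> \<ge> 0"
  shows "ip (dset dm) (hfun \<alpha> tt n) (hfun \<alpha> tt n) > 0"
proof -
  define a where "a = tt (n-1)"
  define c where "c = tt n"
  have ac: "a < c" unfolding a_def c_def using tt_strict[of N tt, OF tm, of "n-1" n] n by auto
  have sub: "{a..c} \<subseteq> dset dm" unfolding a_def c_def by (rule interval_in_D[OF tm t0 tN n])
  define m0 where "m0 = exp (-2 * \<alpha> * (c - a))"
  have m0: "m0 > 0" unfolding m0_def by simp
  have L2: "hfun \<alpha> tt n \<in> L2 (dset dm)" using hfun_L2[OF al dset_sets] .
  have int1: "integrable lborel (\<lambda>x. indicator (dset dm) x *\<^sub>R (hfun \<alpha> tt n x * hfun \<alpha> tt n x))"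
    using L2_int[OF L2] unfolding set_integrable_def by (simp add: power2_eq_square)
  have int2: "integrable lborel (\<lambda>x. m0 * indicator {a..<c} x)"
    by (intro integrable_mult_right integrable_real_indicator) (use ac in auto)
  have le: "m0 * indicator {a..<c} x \<le> indicator (dset dm) x *\<^sub>R (hfun \<alpha> tt n x * hfun \<alpha> tt n x)" for x
  proof (cases "x \<in> {a..<c}")
    case True
    then have xD: "x \<in> dset dm" using sub by auto
    have "hfun \<alpha> tt n x = exp (- \<alpha> * (c - x))" using True unfolding hfun_def a_def c_def by simp
    then have "hfun \<alpha> tt n x * hfun \<alpha> tt n x = exp (-2 * \<alpha> * (c - x))" by (simp add: exp_add[symmetric])
    moreover have "-2 * \<alpha> * (c - a) \<le> -2 * \<alpha> * (c - x)" using True al by (auto intro: mult_left_mono)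
    ultimately show ?thesis using True xD unfolding m0_def by simp
  next
    case False then show ?thesis using hfun_nonneg by (auto simp: indicator_def)
  qed
  have "integral\<^sup>L lborel (\<lambda>x. m0 * indicator {a..<c} x) = m0 * (c - a)"
    using ac by simp
  moreover have "integral\<^sup>L lborel (\<lambda>x. m0 * indicator {a..<c} x) \<le> ip (dset dm) (hfun \<alpha> tt n) (hfun \<alpha> tt n)"
    unfolding ip_def set_lebesgue_integral_def by (rule integral_mono[OF int2 int1 le])
  ultimately show ?thesis using m0 ac by (smt (verit) mult_pos_pos)
qed

lemma cmod_le: "x \<le> 1 + x^2" for x :: real
proof -
  have "0 \<le> (x - 1/2)^2" by simp
  then show ?thesis by (simp add: power2_eq_square algebra_simps)
qed

lemma F_int:
  assumes F: "F \<in> borel_measurable lborel" "set_integrable lborel {-pi..pi} (\<lambda>w. (cmod (F w))^2)"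
  shows "set_integrable lborel {-pi..pi} (\<lambda>w. F w * exp (\<i> * complex_of_real (w * t)))"
proof (rule set_integrable_bound[of _ _ "\<lambda>w. 1 + (cmod (F w))^2"])
  show "set_integrable lborel {-pi..pi} (\<lambda>w. 1 + (cmod (F w))^2)"
    by (intro set_integral_add F(2) borel_integrable_atLeastAtMost' continuous_on_const)
  show "set_borel_measurable lborel {-pi..pi} (\<lambda>w. F w * exp (\<i> * complex_of_real (w * t)))"
    unfolding set_borel_measurable_def using F(1) by measurable
  show "AE w\<in>{-pi..pi} in lborel. norm (F w * exp (\<i> * complex_of_real (w * t))) \<le> norm (1 + (cmod (F w))^2)"
    using cmod_le by (auto simp: norm_mult norm_exp_i_times)
qed

lemma sq_bound: "(cmod (complex_of_real a * x + complex_of_real b * y))^2 \<le> 2 * a^2 * (cmod x)^2 + 2 * b^2 * (cmod y)^2"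
proof -
  have "cmod (complex_of_real a * x + complex_of_real b * y) \<le> \<bar>a\<bar> * cmod x + \<bar>b\<bar> * cmod y"
    by (rule order_trans[OF norm_triangle_ineq]) (simp add: norm_mult)
  then have "(cmod (complex_of_real a * x + complex_of_real b * y))^2 \<le> (\<bar>a\<bar> * cmod x + \<bar>b\<bar> * cmod y)^2"
    by (intro power_mono) auto
  also have "\<dots> \<le> 2 * (\<bar>a\<bar> * cmod x)^2 + 2 * (\<bar>b\<bar> * cmod y)^2"
  proof -
    have "0 \<le> (\<bar>a\<bar> * cmod x - \<bar>b\<bar> * cmod y)^2" by simp
    then show ?thesis unfolding power2_diff power2_sum by linarith
  qed
  also have "\<dots> = 2 * a^2 * (cmod x)^2 + 2 * b^2 * (cmod y)^2" by (simp add: power_mult_distrib)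
  finally show ?thesis .
qed

lemma BL_zero: "(\<lambda>_. 0) \<in> BL dm"
proof -
  have "(\<lambda>_. 0) \<in> L2 (dset dm)" using sip.V_zero[OF sip_L2[OF dset_sets]] .
  moreover have "bandlimited dm (\<lambda>_. 0)"
  proof (cases dm)
    case RealLine then show ?thesis
      by (auto intro!: exI[of _ "\<lambda>_. 0"] simp: set_integrable_def set_lebesgue_integral_def)
  next
    case (Interval T) then show ?thesis by (auto intro!: exI[of _ "\<lambda>_. 0"])
  qed
  ultimately show ?thesis unfolding BL_def by auto
qed

lemma BL_lin:
  assumes u: "u \<in> BL dm" and v: "v \<in> BL dm"
  shows "(\<lambda>t. a * u t + b * v t) \<in> BL dm"
proof -
  have uL: "u \<in> L2 (dset dm)" and vL: "v \<in> L2 (dset dm)" and bu: "bandlimited dm u" and bv: "bandlimited dm v"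
    using u v unfolding BL_def by auto
  have "(\<lambda>t. a * u t + b * v t) \<in> L2 (dset dm)" using sip.V_lin[OF sip_L2[OF dset_sets] uL vL] .
  moreover have "bandlimited dm (\<lambda>t. a * u t + b * v t)"
  proof (cases dm)
    case (Interval T)
    obtain a1 b1 where 1: "\<forall>t\<in>{0..real T}. u t = a1 0 + (\<Sum>k=1..(T - 1) div 2.
                a1 k * cos (2 * pi * real k * t / real T) + b1 k * sin (2 * pi * real k * t / real T))"
      using bu Interval by auto
    obtain a2 b2 where 2: "\<forall>t\<in>{0..real T}. v t = a2 0 + (\<Sum>k=1..(T - 1) div 2.
                a2 k * cos (2 * pi * real k * t / real T) + b2 k * sin (2 * pi * real k * t / real T))"
      using bv Interval by auto
    show ?thesis unfolding Interval bandlimited.simps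
      by (rule exI[of _ "\<lambda>k. a * a1 k + b * a2 k"], rule exI[of _ "\<lambda>k. a * b1 k + b * b2 k"])
        (use 1 2 in \<open>auto simp: algebra_simps sum.distrib sum_distrib_left\<close>)
  next
    case RealLine
    obtain F where F: "F \<in> borel_measurable lborel" "set_integrable lborel {-pi..pi} (\<lambda>w. (cmod (F w))^2)"
      "\<forall>t. complex_of_real (u t) = set_lebesgue_integral lborel {-pi..pi} (\<lambda>w. F w * exp (\<i> * complex_of_real (w * t)))"
      using bu RealLine by auto
    obtain G where G: "G \<in> borel_measurable lborel" "set_integrable lborel {-pi..pi} (\<lambda>w. (cmod (G w))^2)"
      "\<forall>t. complex_of_real (v t) = set_lebesgue_integral lborel {-pi..pi} (\<lambda>w. G w * exp (\<i> * complex_of_real (w * t)))"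
      using bv RealLine by auto
    define H where "H w = complex_of_real a * F w + complex_of_real b * G w" for w
    have Hm: "H \<in> borel_measurable lborel" unfolding H_def using F(1) G(1) by measurable
    have Hi: "set_integrable lborel {-pi..pi} (\<lambda>w. (cmod (H w))^2)"
    proof (rule set_integrable_bound[of _ _ "\<lambda>w. 2 * a^2 * (cmod (F w))^2 + 2 * b^2 * (cmod (G w))^2"])
      show "set_integrable lborel {-pi..pi} (\<lambda>w. 2 * a^2 * (cmod (F w))^2 + 2 * b^2 * (cmod (G w))^2)"
      proof -
        have i1: "set_integrable lborel {-pi..pi} (\<lambda>w. (2*a^2) * (cmod (F w))^2)"
          by (rule set_integrable_mult_right) (rule F(2))
        have i2: "set_integrable lborel {-pi..pi} (\<lambda>w. (2*b^2) * (cmod (G w))^2)"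
          by (rule set_integrable_mult_right) (rule G(2))
        show ?thesis using set_integral_add(1)[OF i1 i2] by (simp add: mult.assoc)
      qed
      show "set_borel_measurable lborel {-pi..pi} (\<lambda>w. (cmod (H w))^2)"
        unfolding set_borel_measurable_def using Hm by measurable
      show "AE w\<in>{-pi..pi} in lborel. norm ((cmod (H w))^2) \<le> norm (2 * a^2 * (cmod (F w))^2 + 2 * b^2 * (cmod (G w))^2)"
        using sq_bound unfolding H_def by (auto intro!: order_trans[OF _ abs_ge_self])
    qed
    have "complex_of_real (a * u t + b * v t) = set_lebesgue_integral lborel {-pi..pi} (\<lambda>w. H w * exp (\<i> * complex_of_real (w * t)))" for t
    proof -
      have "complex_of_real (a * u t + b * v t) = complex_of_real a * complex_of_real (u t) + complex_of_real b * complex_of_real (v t)"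
        by simp
      also have "\<dots> = complex_of_real a * set_lebesgue_integral lborel {-pi..pi} (\<lambda>w. F w * exp (\<i> * complex_of_real (w * t)))
          + complex_of_real b * set_lebesgue_integral lborel {-pi..pi} (\<lambda>w. G w * exp (\<i> * complex_of_real (w * t)))"
        using F(3) G(3) by simp
      also have "\<dots> = set_lebesgue_integral lborel {-pi..pi} (\<lambda>w. complex_of_real a * (F w * exp (\<i> * complex_of_real (w * t))))
          + set_lebesgue_integral lborel {-pi..pi} (\<lambda>w. complex_of_real b * (G w * exp (\<i> * complex_of_real (w * t))))"
        by (simp add: set_integral_mult_right)
      also have "\<dots> = set_lebesgue_integral lborel {-pi..pi} (\<lambda>w. complex_of_real a * (F w * exp (\<i> * complex_of_real (w * t))) + complex_of_real b * (G w * exp (\<i> * complex_of_real (w * t))))"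
        by (intro set_integral_add(2)[symmetric] set_integrable_mult_right F_int F(1,2) G(1,2))
      also have "\<dots> = set_lebesgue_integral lborel {-pi..pi} (\<lambda>w. H w * exp (\<i> * complex_of_real (w * t)))"
        unfolding H_def by (simp add: algebra_simps)
      finally show ?thesis .
    qed
    then show ?thesis unfolding RealLine using Hm Hi by auto
  qed
  ultimately show ?thesis unfolding BL_def by auto
qed


definition phi :: "nat \<Rightarrow> nat \<times> bool \<Rightarrow> real \<Rightarrow> real" where
  "phi T i = (\<lambda>t. if snd i then sin (2 * pi * real (fst i) * t / real T) else cos (2 * pi * real (fst i) * t / real T))"

definition Iset :: "nat \<Rightarrow> (nat \<times> bool) set" where
  "Iset T = ((\<lambda>k. (k, False)) ` {0..(T - 1) div 2}) \<union> ((\<lambda>k. (k, True)) ` {1..(T - 1) div 2})"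

lemma Iset_finite: "finite (Iset T)" unfolding Iset_def by auto

lemma phi_cont: "continuous_on A (phi T i)"
  unfolding phi_def divide_inverse by (cases "snd i") (auto intro!: continuous_intros)

lemma phi_L2: "phi T i \<in> L2 {0..real T}"
proof -
  have "phi T i \<in> borel_measurable lborel"
    using phi_cont[of UNIV T i] by (simp add: borel_measurable_continuous_onI)
  moreover have "set_integrable lborel {0..real T} (\<lambda>t. (phi T i t)^2)"
    by (rule borel_integrable_atLeastAtMost') (intro continuous_intros phi_cont)
  ultimately show ?thesis unfolding L2_def by auto
qed

lemma sum_Iset:
  "(\<Sum>i\<in>Iset T. c i * phi T i t) =
    c (0, False) + (\<Sum>k=1..(T - 1) div 2. c (k, False) * cos (2 * pi * real k * t / real T) + c (k, True) * sin (2 * pi * real k * t / real T))"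
proof -
  let ?M = "(T - 1) div 2"
  have disj: "((\<lambda>k. (k, False)) ` {0..?M}) \<inter> ((\<lambda>k. (k, True)) ` {1..?M}) = {}" by auto
  have "(\<Sum>i\<in>Iset T. c i * phi T i t) = (\<Sum>i\<in>(\<lambda>k. (k, False)) ` {0..?M}. c i * phi T i t) + (\<Sum>i\<in>(\<lambda>k. (k, True)) ` {1..?M}. c i * phi T i t)"
    unfolding Iset_def by (rule sum.union_disjoint) (use disj in auto)
  also have "(\<Sum>i\<in>(\<lambda>k. (k, False)) ` {0..?M}. c i * phi T i t) = (\<Sum>k=0..?M. c (k, False) * cos (2 * pi * real k * t / real T))"
    by (subst sum.reindex) (auto simp: inj_on_def phi_def)
  also have "\<dots> = c (0, False) + (\<Sum>k=1..?M. c (k, False) * cos (2 * pi * real k * t / real T))"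
    by (subst sum.atLeast_Suc_atMost) auto
  also have "(\<Sum>i\<in>(\<lambda>k. (k, True)) ` {1..?M}. c i * phi T i t) = (\<Sum>k=1..?M. c (k, True) * sin (2 * pi * real k * t / real T))"
    by (subst sum.reindex) (auto simp: inj_on_def phi_def)
  finally show ?thesis by (simp add: sum.distrib)
qed

lemma lin_BL: "lin (Iset T) (phi T) \<subseteq> BL (Interval T)"
proof
  fix v assume v: "v \<in> lin (Iset T) (phi T)"
  interpret S: sip "L2 {0..real T}" "ip {0..real T}" by (rule sip_L2) simp
  have "v \<in> L2 {0..real T}" using S.lin_V[of "Iset T" "phi T", OF Iset_finite] phi_L2 v by auto
  moreover obtain c where c: "v = (\<lambda>t. \<Sum>i\<in>Iset T. c i * phi T i t)" using v unfolding lin_def by auto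
  have "bandlimited (Interval T) v"
    unfolding bandlimited.simps c sum_Iset
    by (rule exI[of _ "\<lambda>k. c (k, False)"], rule exI[of _ "\<lambda>k. c (k, True)"]) simp
  ultimately show "v \<in> BL (Interval T)" unfolding BL_def by simp
qed

lemma BL_lin_eqv:
  assumes v: "v \<in> BL (Interval T)"
  shows "\<exists>w\<in>lin (Iset T) (phi T). ip {0..real T} (\<lambda>t. v t - w t) (\<lambda>t. v t - w t) = 0"
proof -
  obtain a b where ab: "\<forall>t\<in>{0..real T}. v t = a 0 + (\<Sum>k=1..(T - 1) div 2.
                a k * cos (2 * pi * real k * t / real T) + b k * sin (2 * pi * real k * t / real T))"
    using v unfolding BL_def by auto
  define c where "c i = (if snd i then b (fst i) else a (fst i))" for i :: "nat \<times> bool"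
  define w where "w = (\<lambda>t. \<Sum>i\<in>Iset T. c i * phi T i t)"
  have wl: "w \<in> lin (Iset T) (phi T)" unfolding w_def lin_def by (intro CollectI exI[of _ c]) (rule refl)
  have eq: "t \<in> {0..real T} \<Longrightarrow> v t = w t" for t unfolding w_def sum_Iset c_def using ab by simp
  have "ip {0..real T} (\<lambda>t. v t - w t) (\<lambda>t. v t - w t) = (LINT t:{0..real T}|lborel. 0)"
    unfolding ip_def set_lebesgue_integral_def by (intro Bochner_Integration.integral_cong refl) (auto simp: eq indicator_def)
  then show ?thesis using wl by (intro bexI[of _ w]) auto
qed

lemma bexist_Interval:
  assumes u: "u \<in> L2 {0..real T}"
  shows "\<exists>p\<in>BL (Interval T). \<forall>v\<in>BL (Interval T). ip {0..real T} (\<lambda>t. u t - p t) v = 0"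
proof -
  interpret S: sip "L2 {0..real T}" "ip {0..real T}" by (rule sip_L2) simp
  obtain p where p: "p \<in> lin (Iset T) (phi T)" "\<forall>w\<in>lin (Iset T) (phi T). ip {0..real T} (\<lambda>t. u t - p t) w = 0"
    using S.gs[of "Iset T" "phi T" u, OF Iset_finite _ u] phi_L2 by auto
  have linV: "lin (Iset T) (phi T) \<subseteq> L2 {0..real T}" using S.lin_V[of "Iset T" "phi T", OF Iset_finite] phi_L2 by auto
  have pV: "p \<in> L2 {0..real T}" using p linV by auto
  have upV: "(\<lambda>t. u t - p t) \<in> L2 {0..real T}" using S.V_diff[OF u pV] .
  show ?thesis
  proof (intro bexI[of _ p] ballI)
    show "p \<in> BL (Interval T)" using p lin_BL by auto
    fix v assume v: "v \<in> BL (Interval T)"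
    have vV: "v \<in> L2 {0..real T}" using v unfolding BL_def by simp
    obtain w where w: "w \<in> lin (Iset T) (phi T)" "ip {0..real T} (\<lambda>t. v t - w t) (\<lambda>t. v t - w t) = 0"
      using BL_lin_eqv[OF v] by auto
    have wV: "w \<in> L2 {0..real T}" using w linV by auto
    have "S.eqv v w" unfolding S.eqv_def using w by simp
    then have "ip {0..real T} (\<lambda>t. u t - p t) v = ip {0..real T} (\<lambda>t. u t - p t) w"
      by (rule S.eqv_f_right[OF _ vV wV upV])
    then show "ip {0..real T} (\<lambda>t. u t - p t) v = 0" using p(2) w(1) by simp
  qed
qed


definition K :: "real \<Rightarrow> real" where "K x = sinc (pi * x)"

lemma K_isCont: "isCont K x"
  unfolding K_def by (intro continuous_intros isCont_o2[OF _ isCont_sinc]) 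

lemma K_cont: "continuous_on A K"
  using K_isCont by (simp add: continuous_at_imp_continuous_on)

lemma K_meas[measurable]: "K \<in> borel_measurable borel"
  using K_cont[of UNIV] by (rule borel_measurable_continuous_onI)

lemma K_even: "K (- x) = K x" unfolding K_def by simp

lemma K_abs_le1: "\<bar>K x\<bar> \<le> 1"
proof (cases "x = 0")
  case True then show ?thesis by (simp add: K_def)
next
  case False
  then have "pi * x \<noteq> 0" by simp
  moreover have "\<bar>sin (pi * x)\<bar> \<le> \<bar>pi * x\<bar>" by (rule abs_sin_x_le_abs_x)
  ultimately show ?thesis unfolding K_def by (simp add: abs_divide divide_le_eq_1)
qed

lemma K_abs_le_inv: "x \<noteq> 0 \<Longrightarrow> \<bar>K x\<bar> \<le> 1 / (pi * \<bar>x\<bar>)"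
proof -
  assume x: "x \<noteq> 0"
  have "\<bar>K x\<bar> = \<bar>sin (pi * x)\<bar> / (pi * \<bar>x\<bar>)" unfolding K_def using x by (simp add: abs_divide abs_mult)
  also have "\<dots> \<le> 1 / (pi * \<bar>x\<bar>)" using x by (intro divide_right_mono) auto
  finally show ?thesis .
qed

lemma K_sq_bound: "(K x)^2 \<le> 2 * inverse (1 + x^2)"
proof (cases "\<bar>x\<bar> \<le> 1")
  case True
  have "(K x)^2 \<le> 1" using K_abs_le1[of x] abs_square_le_1 by blast
  moreover have "x^2 \<le> 1" using True abs_square_le_1 by blast
  then have "1 \<le> 2 * inverse (1 + x^2)"
    by (simp add: divide_simps add_pos_nonneg)
  ultimately show ?thesis by linarith
next
  case False
  then have x0: "x \<noteq> 0" and x1: "1 < \<bar>x\<bar>" by auto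
  have "\<bar>K x\<bar> \<le> 1 / (pi * \<bar>x\<bar>)" using K_abs_le_inv[OF x0] .
  also have "\<dots> \<le> 1 / \<bar>x\<bar>" using x0 pi_ge_two by (intro divide_left_mono) (auto intro: order_trans[of _ "1 * \<bar>x\<bar>"])
  finally have "\<bar>K x\<bar> \<le> 1 / \<bar>x\<bar>" .
  then have "\<bar>K x\<bar>^2 \<le> (1 / \<bar>x\<bar>)^2" by (rule power_mono) simp
  then have "(K x)^2 \<le> (1 / \<bar>x\<bar>)^2" by simp
  also have "\<dots> = 1 / x^2" by (simp add: power_divide)
  also have "\<dots> \<le> 2 * inverse (1 + x^2)"
  proof -
    have "1 \<le> x^2" using x1 abs_square_less_1[of x] by linarith
    then have "1 + x^2 \<le> 2 * x^2" by linarith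
    then show ?thesis using x0 by (simp add: field_simps)
  qed
  finally show ?thesis .
qed

lemma inv_int: "integrable lborel (\<lambda>x. inverse (1 + x^2) :: real)"
proof -
  have "set_integrable lborel (einterval (-\<infinity>) \<infinity>) (\<lambda>x. inverse (1 + x^2) :: real)"
    by (rule integrable_inverse_1_plus_square)
  moreover have "einterval (-\<infinity>) \<infinity> = UNIV" by (auto simp: einterval_def)
  ultimately show ?thesis by (simp add: set_integrable_def)
qed

lemma K_sq_int: "integrable lborel (\<lambda>x. (K x)^2)"
proof (rule Bochner_Integration.integrable_bound[of _ "\<lambda>x. 2 * inverse (1 + x^2)"])
  show "integrable lborel (\<lambda>x. 2 * inverse (1 + x^2) :: real)" by (intro integrable_mult_right inv_int)
  show "(\<lambda>x. (K x)^2) \<in> borel_measurable lborel" by measurable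
  show "AE x in lborel. norm ((K x)^2) \<le> norm (2 * inverse (1 + x^2) :: real)"
    using K_sq_bound by (auto simp: abs_le_iff)
qed

lemma Si_odd: "Si (- x) = - Si x"
proof (cases "x \<ge> 0")
  case True then show ?thesis by (rule Si_neg)
next
  case False then show ?thesis using Si_neg[of "-x"] by simp
qed

lemma csinc: "x \<noteq> 0 \<Longrightarrow> sinc (c * x) * c = sin (c * x) / x"
  by (cases "c = 0") auto

lemma sin_sum_id: "sin ((pi + w) * x) + sin ((pi - w) * x) = 2 * sin (pi * x) * cos (w * x)"
  by (simp add: distrib_right left_diff_distrib sin_add sin_diff)

lemma Psi_deriv:
  "((\<lambda>x. (Si ((pi + w) * x) + Si ((pi - w) * x)) / (2 * pi)) has_real_derivative K x * cos (w * x)) (at x)"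
proof -
  have d: "((\<lambda>x. (Si ((pi + w) * x) + Si ((pi - w) * x)) / (2 * pi)) has_real_derivative
      (sinc ((pi + w) * x) * (pi + w) + sinc ((pi - w) * x) * (pi - w)) / (2 * pi)) (at x)"
    by (intro DERIV_cdivide DERIV_add DERIV_chain2[OF DERIV_Si] derivative_eq_intros) auto
  have "(sinc ((pi + w) * x) * (pi + w) + sinc ((pi - w) * x) * (pi - w)) / (2 * pi) = K x * cos (w * x)"
  proof (cases "x = 0")
    case True then show ?thesis by (simp add: K_def)
  next
    case False
    have "(sinc ((pi + w) * x) * (pi + w) + sinc ((pi - w) * x) * (pi - w)) / (2 * pi) =
        (sin ((pi + w) * x) + sin ((pi - w) * x)) / x / (2 * pi)"
      using csinc[OF False, of "pi + w"] csinc[OF False, of "pi - w"] by (simp add: add_divide_distrib)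
    also have "\<dots> = K x * cos (w * x)" unfolding sin_sum_id K_def using False by simp
    finally show ?thesis .
  qed
  with d show ?thesis by simp
qed

lemma KC_int: "R \<ge> 0 \<Longrightarrow> (LINT x|lborel. indicator {-R..R} x * (K x * cos (w * x))) = (Si ((pi + w) * R) + Si ((pi - w) * R)) / pi"
proof -
  assume R: "R \<ge> 0"
  let ?P = "\<lambda>x. (Si ((pi + w) * x) + Si ((pi - w) * x)) / (2 * pi)"
  have cont: "continuous_on {-R..R} (\<lambda>x. K x * cos (w * x))" by (intro continuous_intros K_cont)
  have si: "set_integrable lborel {-R..R} (\<lambda>x. K x * cos (w * x))" by (rule borel_integrable_atLeastAtMost'[OF cont])
  have "((\<lambda>x. K x * cos (w * x)) has_integral (?P R - ?P (-R))) {-R..R}"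
    by (rule fundamental_theorem_of_calculus) (use R in \<open>auto intro!: DERIV_subset[OF Psi_deriv] simp: has_real_derivative_iff_has_vector_derivative[symmetric]\<close>)
  then have "integral {-R..R} (\<lambda>x. K x * cos (w * x)) = ?P R - ?P (-R)" by (rule integral_unique)
  also have "?P R - ?P (-R) = (Si ((pi + w) * R) + Si ((pi - w) * R)) / pi"
    using Si_odd[of "(pi + w) * R"] Si_odd[of "(pi - w) * R"] by (simp add: field_simps)
  finally have "integral {-R..R} (\<lambda>x. K x * cos (w * x)) = (Si ((pi + w) * R) + Si ((pi - w) * R)) / pi" .
  moreover have "set_lebesgue_integral lborel {-R..R} (\<lambda>x. K x * cos (w * x)) = integral {-R..R} (\<lambda>x. K x * cos (w * x))"
    by (rule set_borel_integral_eq_integral(2)[OF si])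
  ultimately show ?thesis by (simp add: set_lebesgue_integral_def)
qed

lemma odd_int_zero:
  fixes f :: "real \<Rightarrow> real"
  assumes "\<And>x. f (- x) = - f x"
  shows "(LINT x|lborel. f x) = 0"
proof -
  have "(LINT x|lborel. f x) = \<bar>-1\<bar> *\<^sub>R (LINT x|lborel. f (0 + -1 * x))"
    by (rule lborel_integral_real_affine) simp
  also have "\<dots> = - (LINT x|lborel. f x)" using assms by simp
  finally show ?thesis by simp
qed

lemma KS_int: "(LINT x|lborel. indicator {-R..R} x * (K x * sin (w * x))) = 0"
  by (rule odd_int_zero) (auto simp: K_even indicator_def)

lemma DR_limit:
  assumes w: "\<bar>w\<bar> < pi"
  shows "(\<lambda>k. (Si ((pi + w) * real k) + Si ((pi - w) * real k)) / pi) \<longlonglongrightarrow> 1"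
proof -
  have l: "(\<lambda>k. Si (c * real k)) \<longlonglongrightarrow> pi / 2" if c: "c > 0" for c
  proof -
    have "filterlim (\<lambda>k. c * real k) at_top sequentially"
      by (intro filterlim_tendsto_pos_mult_at_top[OF tendsto_const c] filterlim_real_sequentially)
    then show ?thesis by (rule filterlim_compose[OF Si_at_top])
  qed
  have "(\<lambda>k. (Si ((pi + w) * real k) + Si ((pi - w) * real k)) / pi) \<longlonglongrightarrow> (pi / 2 + pi / 2) / pi"
    using w by (intro tendsto_divide tendsto_add l) auto
  then show ?thesis by simp
qed

lemma DR_bound: "\<exists>C. \<forall>w R. \<bar>(Si ((pi + w) * R) + Si ((pi - w) * R)) / pi\<bar> \<le> C"
proof -
  obtain B where B: "\<forall>T. \<bar>Si T\<bar> \<le> B" using bounded_Si by blast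
  have "\<bar>(Si ((pi + w) * R) + Si ((pi - w) * R)) / pi\<bar> \<le> 2 * B / pi" for w R
  proof -
    have "\<bar>Si ((pi + w) * R) + Si ((pi - w) * R)\<bar> \<le> 2 * B" using B[rule_format, of "(pi + w) * R"] B[rule_format, of "(pi - w) * R"] by linarith
    then show ?thesis by (simp add: abs_divide divide_right_mono)
  qed
  then show ?thesis by blast
qed


lemma expi: "exp (\<i> * complex_of_real y) = complex_of_real (cos y) + \<i> * complex_of_real (sin y)"
  by (simp add: complex_eq_iff Re_exp Im_exp)

lemma prod_int_bound:
  fixes \<Phi> :: "real \<times> real \<Rightarrow> 'b::{banach, second_countable_topology}"
  assumes m: "\<Phi> \<in> borel_measurable (lborel \<Otimes>\<^sub>M lborel)"
    and g1: "integrable lborel g1" and g2: "integrable lborel g2"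
    and b: "\<And>x y. norm (\<Phi> (x, y)) \<le> g1 x * g2 y"
  shows "integrable (lborel \<Otimes>\<^sub>M lborel) \<Phi>"
proof (rule Bochner_Integration.integrable_bound[of _ "\<lambda>(x,y). g1 x * g2 y"])
  have m1[measurable]: "g1 \<in> borel_measurable lborel" and m2[measurable]: "g2 \<in> borel_measurable lborel"
    using g1 g2 by auto
  show "integrable (lborel \<Otimes>\<^sub>M lborel) (\<lambda>(x,y). g1 x * g2 y)"
  proof (rule lborel_pair.Fubini_integrable)
    show "(\<lambda>(x,y). g1 x * g2 y) \<in> borel_measurable (lborel \<Otimes>\<^sub>M lborel)" by measurable
    have "(\<lambda>x. LINT y|lborel. norm (case (x, y) of (x, y) \<Rightarrow> g1 x * g2 y)) = (\<lambda>x. \<bar>g1 x\<bar> * (LINT y|lborel. \<bar>g2 y\<bar>))"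
      by (simp add: abs_mult)
    moreover have "integrable lborel (\<lambda>x. \<bar>g1 x\<bar> * (LINT y|lborel. \<bar>g2 y\<bar>))"
      by (intro integrable_mult_left integrable_abs g1)
    ultimately show "integrable lborel (\<lambda>x. LINT y|lborel. norm (case (x, y) of (x, y) \<Rightarrow> g1 x * g2 y))" by simp
    show "AE x in lborel. integrable lborel (\<lambda>y. case (x, y) of (x, y) \<Rightarrow> g1 x * g2 y)"
      using g2 by simp
  qed
  show "\<Phi> \<in> borel_measurable (lborel \<Otimes>\<^sub>M lborel)" by (rule m)
  show "AE p in lborel \<Otimes>\<^sub>M lborel. norm (\<Phi> p) \<le> norm (case p of (x, y) \<Rightarrow> g1 x * g2 y)"
    using b by (auto split: prod.splits intro: order_trans[OF _ abs_ge_self])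
qed

locale pw =
  fixes v :: "real \<Rightarrow> real" and G :: "real \<Rightarrow> complex"
  assumes Gm[measurable]: "G \<in> borel_measurable lborel"
    and Gi: "set_integrable lborel {-pi..pi} (\<lambda>w. (cmod (G w))^2)"
    and rep: "\<And>t. complex_of_real (v t) = set_lebesgue_integral lborel {-pi..pi} (\<lambda>w. G w * exp (\<i> * complex_of_real (w * t)))"
    and vL2: "v \<in> L2 UNIV"
begin

lemma G_int: "integrable lborel (\<lambda>w. indicator {-pi..pi} w *\<^sub>R G w)"
  using F_int[OF Gm Gi, of 0] by (simp add: set_integrable_def)

lemma Gn_int: "integrable lborel (\<lambda>w. indicator {-pi..pi} w * cmod (G w))"
  using integrable_norm[OF G_int] by (simp add: norm_mult)

lemma v_meas[measurable]: "v \<in> borel_measurable lborel" using vL2 by (simp add: L2_def)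

lemma v_sq_int: "integrable lborel (\<lambda>t. (v t)^2)" using vL2 by (simp add: L2_def set_integrable_def)

lemma Kv_int: "integrable lborel (\<lambda>t. K (t - s) * v t)"
proof (rule Bochner_Integration.integrable_bound[of _ "\<lambda>t. (K (t - s))^2 + (v t)^2"])
  have "integrable lborel (\<lambda>x. (K (- s + 1 * x))^2)"
    by (rule lborel_integrable_real_affine[OF K_sq_int]) simp
  then have "integrable lborel (\<lambda>t. (K (t - s))^2)" by simp
  then show "integrable lborel (\<lambda>t. (K (t - s))^2 + (v t)^2)" by (intro Bochner_Integration.integrable_add v_sq_int)
  show "(\<lambda>t. K (t - s) * v t) \<in> borel_measurable lborel" by measurable
  show "AE t in lborel. norm (K (t - s) * v t) \<le> norm ((K (t - s))^2 + (v t)^2)"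
    using abs_mult_le_sq by auto
qed

definition DRv :: "real \<Rightarrow> real \<Rightarrow> real" where
  "DRv w R = (Si ((pi + w) * R) + Si ((pi - w) * R)) / pi"

lemma T_eq:
  assumes R: "R \<ge> 0"
  shows "(CLINT t|lborel. complex_of_real (indicator {s - R..s + R} t * K (t - s)) * exp (\<i> * complex_of_real (w * t)))
     = exp (\<i> * complex_of_real (w * s)) * complex_of_real (DRv w R)"
proof -
  let ?f = "\<lambda>t. complex_of_real (indicator {s - R..s + R} t * K (t - s)) * exp (\<i> * complex_of_real (w * t))"
  have "(CLINT t|lborel. ?f t) = \<bar>1\<bar> *\<^sub>R (CLINT x|lborel. ?f (s + 1 * x))"
    by (rule lborel_integral_real_affine) simp
  also have "\<dots> = (CLINT x|lborel. exp (\<i> * complex_of_real (w * s)) * (complex_of_real (indicator {-R..R} x * K x) * exp (\<i> * complex_of_real (w * x))))"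
  proof -
    have e: "exp (\<i> * complex_of_real (w * (s + 1 * x))) = exp (\<i> * complex_of_real (w * s)) * exp (\<i> * complex_of_real (w * x))" for x
      by (simp add: distrib_left exp_add[symmetric])
    have i: "indicator {s - R..s + R} (s + 1 * x) = (indicator {-R..R} x :: real)" for x
      by (auto simp: indicator_def)
    have "?f (s + 1 * x) = exp (\<i> * complex_of_real (w * s)) * (complex_of_real (indicator {-R..R} x * K x) * exp (\<i> * complex_of_real (w * x)))" for x
      unfolding e i by simp
    note pw = this
    show ?thesis unfolding abs_one scaleR_one
      by (rule Bochner_Integration.integral_cong[OF refl]) (rule pw)
  qed
  also have "\<dots> = exp (\<i> * complex_of_real (w * s)) * (CLINT x|lborel. complex_of_real (indicator {-R..R} x * K x) * exp (\<i> * complex_of_real (w * x)))"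
    by (rule integral_mult_right_zero)
  also have "(CLINT x|lborel. complex_of_real (indicator {-R..R} x * K x) * exp (\<i> * complex_of_real (w * x)))
      = (CLINT x|lborel. complex_of_real (indicator {-R..R} x * (K x * cos (w * x))) + \<i> * complex_of_real (indicator {-R..R} x * (K x * sin (w * x))))"
    by (intro Bochner_Integration.integral_cong refl) (simp only: expi, simp add: algebra_simps)
  also have "\<dots> = complex_of_real (LINT x|lborel. indicator {-R..R} x * (K x * cos (w * x))) + \<i> * complex_of_real (LINT x|lborel. indicator {-R..R} x * (K x * sin (w * x)))"
  proof -
    have b: "integrable lborel (\<lambda>x. indicator {-R..R} x * (K x * g (w * x)))" if g: "\<And>y. \<bar>g y\<bar> \<le> 1" "continuous_on UNIV g" for g
    proof (rule Bochner_Integration.integrable_bound[OF integrable_real_indicator[of "{-R..R}"]])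
      show "{-R..R} \<in> sets lborel" by simp
      show "emeasure lborel {-R..R} < \<infinity>" by (simp add: emeasure_lborel_Icc_eq)
      have "g \<in> borel_measurable borel" using g(2) by (rule borel_measurable_continuous_onI)
      then show "(\<lambda>x. indicator {-R..R} x * (K x * g (w * x))) \<in> borel_measurable lborel" by measurable
      have "\<bar>K x * g (w * x)\<bar> \<le> 1" for x using K_abs_le1[of x] g(1)[of "w * x"] by (simp add: abs_mult mult_le_one)
      then show "AE x in lborel. norm (indicator {-R..R} x * (K x * g (w * x))) \<le> norm (indicator {-R..R} x :: real)"
        by (auto simp: indicator_def)
    qed
    have c: "integrable lborel (\<lambda>x. indicator {-R..R} x * (K x * cos (w * x)))" by (rule b) (auto intro: continuous_intros)
    have s: "integrable lborel (\<lambda>x. indicator {-R..R} x * (K x * sin (w * x)))" by (rule b) (auto intro: continuous_intros)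
    have ci: "integrable lborel (\<lambda>x. complex_of_real (indicator {-R..R} x * (K x * cos (w * x))))"
      by (rule integrable_of_real[OF c])
    have si: "integrable lborel (\<lambda>x. \<i> * complex_of_real (indicator {-R..R} x * (K x * sin (w * x))))"
      by (rule integrable_mult_right) (rule integrable_of_real[OF s])
    have "(CLINT x|lborel. complex_of_real (indicator {-R..R} x * (K x * cos (w * x))) + \<i> * complex_of_real (indicator {-R..R} x * (K x * sin (w * x))))
      = (CLINT x|lborel. complex_of_real (indicator {-R..R} x * (K x * cos (w * x)))) + (CLINT x|lborel. \<i> * complex_of_real (indicator {-R..R} x * (K x * sin (w * x))))"
      by (rule Bochner_Integration.integral_add[OF ci si])
    also have "\<dots> = complex_of_real (LINT x|lborel. indicator {-R..R} x * (K x * cos (w * x))) + \<i> * complex_of_real (LINT x|lborel. indicator {-R..R} x * (K x * sin (w * x)))"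
      by (simp only: integral_mult_right_zero integral_complex_of_real)
    finally show ?thesis .
  qed
  also have "\<dots> = complex_of_real (DRv w R)" unfolding KC_int[OF R] KS_int DRv_def by simp
  finally show ?thesis by simp
qed

lemma J_complex:
  assumes R: "R \<ge> 0"
  shows "complex_of_real (LINT t|lborel. indicator {s - R..s + R} t * (K (t - s) * v t))
    = (CLINT w|lborel. indicator {-pi..pi} w *\<^sub>R (G w * (exp (\<i> * complex_of_real (w * s)) * complex_of_real (DRv w R))))"
proof -
  define a where "a t = indicator {s - R..s + R} t * K (t - s)" for t
  define \<Phi> where "\<Phi> t w = complex_of_real (a t) * (indicator {-pi..pi} w *\<^sub>R (G w * exp (\<i> * complex_of_real (w * t))))" for t w
  have am[measurable]: "a \<in> borel_measurable lborel" unfolding a_def by measurable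
  have "complex_of_real (LINT t|lborel. indicator {s - R..s + R} t * (K (t - s) * v t)) = complex_of_real (LINT t|lborel. a t * v t)"
    unfolding a_def by (simp only: mult.assoc)
  also have "\<dots> = (CLINT t|lborel. complex_of_real (a t * v t))" by (rule integral_complex_of_real[symmetric])
  also have "\<dots> = (CLINT t|lborel. complex_of_real (a t) * complex_of_real (v t))" by (simp only: of_real_mult)
  also have "\<dots> = (CLINT t|lborel. CLINT w|lborel. \<Phi> t w)"
  proof (intro Bochner_Integration.integral_cong refl)
    fix t
    show "complex_of_real (a t) * complex_of_real (v t) = (CLINT w|lborel. \<Phi> t w)"
      unfolding \<Phi>_def rep[of t] set_lebesgue_integral_def by (rule integral_mult_right_zero[symmetric])
  qed
  also have "\<dots> = (CLINT w|lborel. CLINT t|lborel. \<Phi> t w)"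
  proof (rule lborel_pair.Fubini_integral[symmetric])
    show "integrable (lborel \<Otimes>\<^sub>M lborel) (case_prod \<Phi>)"
    proof (rule prod_int_bound[of _ "indicator {s - R..s + R}" "\<lambda>w. indicator {-pi..pi} w * cmod (G w)"])
      show "case_prod \<Phi> \<in> borel_measurable (lborel \<Otimes>\<^sub>M lborel)" unfolding \<Phi>_def by measurable
      show "integrable lborel (indicator {s - R..s + R} :: real \<Rightarrow> real)"
        by (rule integrable_real_indicator) (auto simp: emeasure_lborel_Icc_eq)
      show "integrable lborel (\<lambda>w. indicator {-pi..pi} w * cmod (G w))" by (rule Gn_int)
      fix t w
      have "\<bar>a t\<bar> \<le> indicator {s - R..s + R} t" unfolding a_def using K_abs_le1[of "t - s"] by (auto simp: indicator_def)
      then show "norm (case_prod \<Phi> (t, w)) \<le> indicator {s - R..s + R} t * (indicator {-pi..pi} w * cmod (G w))"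
        unfolding \<Phi>_def by (auto simp: norm_mult norm_exp_i_times indicator_def intro: mult_left_le_one_le)
    qed
  qed
  also have "\<dots> = (CLINT w|lborel. indicator {-pi..pi} w *\<^sub>R (G w * (exp (\<i> * complex_of_real (w * s)) * complex_of_real (DRv w R))))"
  proof (intro Bochner_Integration.integral_cong refl)
    fix w
    have "(CLINT t|lborel. \<Phi> t w) = (CLINT t|lborel. (indicator {-pi..pi} w *\<^sub>R G w) * (complex_of_real (a t) * exp (\<i> * complex_of_real (w * t))))"
      unfolding \<Phi>_def by (intro Bochner_Integration.integral_cong refl) (auto simp: indicator_def)
    also have "\<dots> = (indicator {-pi..pi} w *\<^sub>R G w) * (CLINT t|lborel. complex_of_real (a t) * exp (\<i> * complex_of_real (w * t)))"
      by (rule integral_mult_right_zero)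
    also have "(CLINT t|lborel. complex_of_real (a t) * exp (\<i> * complex_of_real (w * t))) = exp (\<i> * complex_of_real (w * s)) * complex_of_real (DRv w R)"
      unfolding a_def by (rule T_eq[OF R])
    finally show "(CLINT t|lborel. \<Phi> t w) = indicator {-pi..pi} w *\<^sub>R (G w * (exp (\<i> * complex_of_real (w * s)) * complex_of_real (DRv w R)))"
      by (simp add: indicator_def)
  qed
  finally show ?thesis .
qed

lemma reproduce: "(LINT t|lborel. K (t - s) * v t) = v s"
proof -
  define J where "J k = (LINT t|lborel. indicator {s - real k..s + real k} t * (K (t - s) * v t))" for k :: nat
  have J1: "J \<longlonglongrightarrow> (LINT t|lborel. K (t - s) * v t)"
    unfolding J_def
  proof (rule integral_dominated_convergence[where w="\<lambda>t. \<bar>K (t - s) * v t\<bar>"])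
    show "(\<lambda>t. K (t - s) * v t) \<in> borel_measurable lborel" by measurable
    show "\<And>i. (\<lambda>t. indicator {s - real i..s + real i} t * (K (t - s) * v t)) \<in> borel_measurable lborel" by measurable
    show "integrable lborel (\<lambda>t. \<bar>K (t - s) * v t\<bar>)" by (intro integrable_abs Kv_int)
    show "AE t in lborel. (\<lambda>i. indicator {s - real i..s + real i} t * (K (t - s) * v t)) \<longlonglongrightarrow> K (t - s) * v t"
    proof (rule AE_I2)
      fix t
      obtain k0 :: nat where "\<bar>t - s\<bar> \<le> real k0" using real_arch_simple by blast
      then have "eventually (\<lambda>i. indicator {s - real i..s + real i} t * (K (t - s) * v t) = K (t - s) * v t) sequentially"
        by (intro eventually_sequentiallyI[of k0]) (auto simp: indicator_def abs_le_iff)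
      then show "(\<lambda>i. indicator {s - real i..s + real i} t * (K (t - s) * v t)) \<longlonglongrightarrow> K (t - s) * v t"
        by (rule tendsto_eventually)
    qed
    show "\<And>i. AE t in lborel. norm (indicator {s - real i..s + real i} t * (K (t - s) * v t)) \<le> \<bar>K (t - s) * v t\<bar>"
      by (auto simp: indicator_def)
  qed
  obtain C where C: "\<forall>w R. \<bar>(Si ((pi + w) * R) + Si ((pi - w) * R)) / pi\<bar> \<le> C" using DR_bound by blast
  have J2: "(\<lambda>k. complex_of_real (J k)) \<longlonglongrightarrow> complex_of_real (v s)"
  proof -
    have "(\<lambda>k. CLINT w|lborel. indicator {-pi..pi} w *\<^sub>R (G w * (exp (\<i> * complex_of_real (w * s)) * complex_of_real (DRv w (real k)))))
        \<longlonglongrightarrow> (CLINT w|lborel. indicator {-pi..pi} w *\<^sub>R (G w * exp (\<i> * complex_of_real (w * s))))"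
    proof (rule integral_dominated_convergence[where w="\<lambda>w. C * (indicator {-pi..pi} w * cmod (G w))"])
      show "(\<lambda>w. indicator {-pi..pi} w *\<^sub>R (G w * exp (\<i> * complex_of_real (w * s)))) \<in> borel_measurable lborel" by measurable
      show "\<And>i. (\<lambda>w. indicator {-pi..pi} w *\<^sub>R (G w * (exp (\<i> * complex_of_real (w * s)) * complex_of_real (DRv w (real i))))) \<in> borel_measurable lborel"
        unfolding DRv_def by measurable
      show "integrable lborel (\<lambda>w. C * (indicator {-pi..pi} w * cmod (G w)))" by (intro integrable_mult_right Gn_int)
      have "AE w in lborel. w \<noteq> pi" "AE w in lborel. w \<noteq> -pi" by (rule AE_lborel_singleton)+
      then show "AE w in lborel. (\<lambda>i. indicator {-pi..pi} w *\<^sub>R (G w * (exp (\<i> * complex_of_real (w * s)) * complex_of_real (DRv w (real i)))))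
          \<longlonglongrightarrow> indicator {-pi..pi} w *\<^sub>R (G w * exp (\<i> * complex_of_real (w * s)))"
      proof eventually_elim
        case (elim w)
        show ?case
        proof (cases "w \<in> {-pi..pi}")
          case True
          then have "\<bar>w\<bar> < pi" using elim by auto
          then have "(\<lambda>i. DRv w (real i)) \<longlonglongrightarrow> 1"
            unfolding DRv_def by (rule DR_limit)
          then have "(\<lambda>i. indicator {-pi..pi} w *\<^sub>R (G w * (exp (\<i> * complex_of_real (w * s)) * complex_of_real (DRv w (real i)))))
              \<longlonglongrightarrow> indicator {-pi..pi} w *\<^sub>R (G w * (exp (\<i> * complex_of_real (w * s)) * complex_of_real 1))"
            by (intro tendsto_intros)
          then show ?thesis by simp
        next
          case False then show ?thesis by simp
        qed
      qed
      fix i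
      show "AE w in lborel. norm (indicator {-pi..pi} w *\<^sub>R (G w * (exp (\<i> * complex_of_real (w * s)) * complex_of_real (DRv w (real i))))) \<le> C * (indicator {-pi..pi} w * cmod (G w))"
      proof (rule AE_I2)
        fix w
        have "\<bar>DRv w (real i)\<bar> \<le> C" using C unfolding DRv_def by blast
        then have "cmod (G w) * \<bar>DRv w (real i)\<bar> \<le> cmod (G w) * C" by (intro mult_left_mono) auto
        then show "norm (indicator {-pi..pi} w *\<^sub>R (G w * (exp (\<i> * complex_of_real (w * s)) * complex_of_real (DRv w (real i))))) \<le> C * (indicator {-pi..pi} w * cmod (G w))"
          by (auto simp: indicator_def norm_mult norm_exp_i_times mult.commute)
      qed
    qed
    moreover have "(CLINT w|lborel. indicator {-pi..pi} w *\<^sub>R (G w * exp (\<i> * complex_of_real (w * s)))) = complex_of_real (v s)"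
      using rep[of s] by (simp add: set_lebesgue_integral_def)
    moreover have "complex_of_real (J k) = (CLINT w|lborel. indicator {-pi..pi} w *\<^sub>R (G w * (exp (\<i> * complex_of_real (w * s)) * complex_of_real (DRv w (real k)))))" for k
      unfolding J_def by (rule J_complex) simp
    ultimately show ?thesis by simp
  qed
  then have "J \<longlonglongrightarrow> v s" by (simp add: tendsto_of_real_iff)
  with J1 show ?thesis using LIMSEQ_unique by blast
qed

end


locale hk =
  fixes h :: "real \<Rightarrow> real" and a c :: real
  assumes hm[measurable]: "h \<in> borel_measurable lborel"
    and hb: "\<And>s. \<bar>h s\<bar> \<le> indicator {a..c} s"
    and ac: "a \<le> c"
begin

lemma ind_int: "integrable lborel (indicator {a..c} :: real \<Rightarrow> real)"
  by (rule integrable_real_indicator) (auto simp: emeasure_lborel_Icc_eq)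

lemma ind_integral: "(LINT s|lborel. indicator {a..c} s) = c - a"
  using ac by simp

lemma h_int: "integrable lborel h"
  by (rule Bochner_Integration.integrable_bound[OF ind_int]) (use hb in \<open>auto simp: indicator_def\<close>)

lemma h_L2: "h \<in> L2 UNIV"
proof -
  have "integrable lborel (\<lambda>s. (h s)^2)"
  proof (rule Bochner_Integration.integrable_bound[OF ind_int])
    show "(\<lambda>s. (h s)^2) \<in> borel_measurable lborel" by measurable
    have "(h s)^2 \<le> indicator {a..c} s" for s
      using hb[of s] by (auto simp: indicator_def abs_square_le_1)
    then show "AE s in lborel. norm ((h s)^2) \<le> norm (indicator {a..c} s :: real)" by auto
  qed
  then show ?thesis unfolding L2_def set_integrable_def by simp
qed

definition b :: "real \<Rightarrow> real" where "b t = (LINT s|lborel. h s * K (t - s))"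

lemma b_meas[measurable]: "b \<in> borel_measurable lborel"
  unfolding b_def by measurable

definition S0 where "S0 = \<bar>a\<bar> + \<bar>c\<bar>"
definition C1 where "C1 = 4 * (1 + 2 * S0^2)"

lemma K_shift_bound:
  assumes s: "s \<in> {a..c}" shows "\<bar>K (t - s)\<bar> \<le> sqrt (C1 * inverse (1 + t^2))"
proof -
  have "\<bar>s\<bar> \<le> S0" using s unfolding S0_def by auto
  then have "\<bar>s\<bar>^2 \<le> S0^2" by (rule power_mono) simp
  then have sS: "s^2 \<le> S0^2" by simp
  have "t^2 \<le> 2 * (t - s)^2 + 2 * s^2"
  proof -
    have "0 \<le> (t - 2 * s)^2" by simp
    then show ?thesis by (simp add: power2_eq_square algebra_simps)
  qed
  then have "1 + t^2 \<le> 2 * (1 + 2 * S0^2) * (1 + (t - s)^2)"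
  proof -
    have e: "2 * (1 + 2 * S0^2) * (1 + (t - s)^2) = 2 + 2 * (t - s)^2 + 4 * S0^2 + 4 * (S0^2 * (t - s)^2)"
      by (simp add: algebra_simps)
    have "0 \<le> S0^2 * (t - s)^2" by simp
    then show ?thesis unfolding e using sS \<open>t^2 \<le> 2 * (t - s)^2 + 2 * s^2\<close> zero_le_power2[of S0] by linarith
  qed
  then have i: "inverse (1 + (t - s)^2) \<le> 2 * (1 + 2 * S0^2) * inverse (1 + t^2)"
    by (simp add: field_simps add_pos_nonneg)
  have "(K (t - s))^2 \<le> 2 * inverse (1 + (t - s)^2)" by (rule K_sq_bound)
  also have "\<dots> \<le> C1 * inverse (1 + t^2)" using mult_left_mono[OF i, of 2] unfolding C1_def by (simp add: algebra_simps)
  finally have "\<bar>K (t - s)\<bar>^2 \<le> C1 * inverse (1 + t^2)" by simp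
  then show ?thesis by (simp add: real_le_rsqrt)
qed

lemma b_bound: "\<bar>b t\<bar> \<le> (c - a) * sqrt (C1 * inverse (1 + t^2))"
proof -
  let ?m = "sqrt (C1 * inverse (1 + t^2))"
  have bd: "norm (h s * K (t - s)) \<le> indicator {a..c} s * ?m" for s
  proof (cases "s \<in> {a..c}")
    case True
    have "\<bar>h s\<bar> * \<bar>K (t - s)\<bar> \<le> 1 * ?m"
      using hb[of s] K_shift_bound[OF True, of t] True by (intro mult_mono) auto
    then show ?thesis using True by (simp add: abs_mult)
  next
    case False then have "indicator {a..c} s = (0::real)" by simp
    then have "h s = 0" using hb[of s] by simp
    then show ?thesis using False by simp
  qed
  have f_int: "integrable lborel (\<lambda>s. h s * K (t - s))"
  proof (rule Bochner_Integration.integrable_bound[OF ind_int])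
    show "(\<lambda>s. h s * K (t - s)) \<in> borel_measurable lborel" by measurable
    have "\<bar>h s * K (t - s)\<bar> \<le> indicator {a..c} s" for s
    proof -
      have "\<bar>h s\<bar> * \<bar>K (t - s)\<bar> \<le> \<bar>h s\<bar>" by (rule mult_right_le_one_le) (use K_abs_le1 in auto)
      then show ?thesis using hb[of s] by (simp add: abs_mult)
    qed
    then show "AE s in lborel. norm (h s * K (t - s)) \<le> norm (indicator {a..c} s :: real)" by auto
  qed
  have g_int: "integrable lborel (\<lambda>s. indicator {a..c} s * ?m)" by (rule integrable_mult_left[OF ind_int])
  have "norm (LINT s|lborel. h s * K (t - s)) \<le> (LINT s|lborel. indicator {a..c} s * ?m)"
    by (rule Bochner_Integration.integral_norm_bound_integral[OF f_int g_int]) (use bd in auto)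
  then have "\<bar>b t\<bar> \<le> (LINT s|lborel. indicator {a..c} s * ?m)" by (simp add: b_def)
  also have "\<dots> = (c - a) * ?m" using ac by simp
  finally show ?thesis .
qed

lemma b_L2: "b \<in> L2 UNIV"
proof -
  have "integrable lborel (\<lambda>t. (b t)^2)"
  proof (rule Bochner_Integration.integrable_bound[of _ "\<lambda>t. (c - a)^2 * C1 * inverse (1 + t^2)"])
    show "integrable lborel (\<lambda>t. (c - a)^2 * C1 * inverse (1 + t^2))" by (intro integrable_mult_right inv_int)
    show "(\<lambda>t. (b t)^2) \<in> borel_measurable lborel" by measurable
    have "(b t)^2 \<le> (c - a)^2 * C1 * inverse (1 + t^2)" for t
    proof -
      have C1p: "0 \<le> C1 * inverse (1 + t^2)" unfolding C1_def by (simp add: add_pos_nonneg)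
      have "\<bar>b t\<bar>^2 \<le> ((c - a) * sqrt (C1 * inverse (1 + t^2)))^2" by (rule power_mono[OF b_bound]) simp
      also have "\<dots> = (c - a)^2 * C1 * inverse (1 + t^2)" using C1p by (simp add: power_mult_distrib)
      finally show ?thesis by simp
    qed
    then show "AE t in lborel. norm ((b t)^2) \<le> norm ((c - a)^2 * C1 * inverse (1 + t^2))"
      by (auto intro: order_trans[OF _ abs_ge_self])
  qed
  then show ?thesis unfolding L2_def set_integrable_def by simp
qed

end


lemma ind_trig_int:
  fixes g :: "real \<Rightarrow> real"
  assumes "\<And>y. \<bar>g y\<bar> \<le> 1" "continuous_on UNIV g"
  shows "integrable lborel (\<lambda>w. indicator {-pi..pi} w * g (w * x))"
proof (rule Bochner_Integration.integrable_bound[OF integrable_real_indicator[of "{-pi..pi}"]])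
  show "{-pi..pi} \<in> sets lborel" by simp
  show "emeasure lborel {-pi..pi} < \<infinity>" by (simp add: emeasure_lborel_Icc_eq)
  have "g \<in> borel_measurable borel" using assms(2) by (rule borel_measurable_continuous_onI)
  then show "(\<lambda>w. indicator {-pi..pi} w * g (w * x)) \<in> borel_measurable lborel" by measurable
  show "AE w in lborel. norm (indicator {-pi..pi} w * g (w * x)) \<le> norm (indicator {-pi..pi} w :: real)"
    using assms(1) by (auto simp: indicator_def)
qed

lemma cos_int: "(LINT w|lborel. indicator {-pi..pi} w * cos (w * x)) = 2 * pi * K x"
proof -
  have cont: "continuous_on {-pi..pi} (\<lambda>w. cos (w * x))" by (intro continuous_intros)
  have si: "set_integrable lborel {-pi..pi} (\<lambda>w. cos (w * x))" by (rule borel_integrable_atLeastAtMost'[OF cont])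
  have "integral {-pi..pi} (\<lambda>w. cos (w * x)) = 2 * pi * K x"
  proof (cases "x = 0")
    case True
    then show ?thesis by (simp add: K_def)
  next
    case False
    have "((\<lambda>w. cos (w * x)) has_integral (sin (pi * x) / x - sin (-pi * x) / x)) {-pi..pi}"
    proof (rule fundamental_theorem_of_calculus[where f = "\<lambda>w. sin (w * x) / x"])
      show "- pi \<le> pi" by simp
      fix w assume "w \<in> {-pi..pi}"
      have "((\<lambda>w. sin (w * x) / x) has_real_derivative cos (w * x)) (at w)"
        using False by (auto intro!: derivative_eq_intros)
      then show "((\<lambda>w. sin (w * x) / x) has_vector_derivative cos (w * x)) (at w within {-pi..pi})"
        by (simp add: has_real_derivative_iff_has_vector_derivative[symmetric] has_field_derivative_at_within)
    qed
    then have "integral {-pi..pi} (\<lambda>w. cos (w * x)) = sin (pi * x) / x - sin (-pi * x) / x" by (rule integral_unique)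
    also have "\<dots> = 2 * pi * K x" using False by (simp add: K_def field_simps)
    finally show ?thesis .
  qed
  moreover have "set_lebesgue_integral lborel {-pi..pi} (\<lambda>w. cos (w * x)) = integral {-pi..pi} (\<lambda>w. cos (w * x))"
    by (rule set_borel_integral_eq_integral(2)[OF si])
  ultimately show ?thesis by (simp add: set_lebesgue_integral_def)
qed

lemma sin_int: "(LINT w|lborel. indicator {-pi..pi} w * sin (w * x)) = 0"
  by (rule odd_int_zero) (auto simp: indicator_def)

lemma kernel_id: "(CLINT w|lborel. complex_of_real (indicator {-pi..pi} w) * exp (\<i> * complex_of_real (w * x))) = complex_of_real (2 * pi * K x)"
proof -
  have ci: "integrable lborel (\<lambda>w. complex_of_real (indicator {-pi..pi} w * cos (w * x)))"
    by (rule integrable_of_real[OF ind_trig_int]) (auto intro: continuous_intros)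
  have si: "integrable lborel (\<lambda>w. \<i> * complex_of_real (indicator {-pi..pi} w * sin (w * x)))"
    by (rule integrable_mult_right, rule integrable_of_real[OF ind_trig_int]) (auto intro: continuous_intros)
  have "(CLINT w|lborel. complex_of_real (indicator {-pi..pi} w) * exp (\<i> * complex_of_real (w * x)))
      = (CLINT w|lborel. complex_of_real (indicator {-pi..pi} w * cos (w * x)) + \<i> * complex_of_real (indicator {-pi..pi} w * sin (w * x)))"
    by (intro Bochner_Integration.integral_cong refl) (simp only: expi, simp add: algebra_simps)
  also have "\<dots> = (CLINT w|lborel. complex_of_real (indicator {-pi..pi} w * cos (w * x))) + (CLINT w|lborel. \<i> * complex_of_real (indicator {-pi..pi} w * sin (w * x)))"
    by (rule Bochner_Integration.integral_add[OF ci si])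
  also have "\<dots> = complex_of_real (LINT w|lborel. indicator {-pi..pi} w * cos (w * x)) + \<i> * complex_of_real (LINT w|lborel. indicator {-pi..pi} w * sin (w * x))"
    by (simp only: integral_mult_right_zero integral_complex_of_real)
  finally show ?thesis unfolding cos_int sin_int by simp
qed

context hk begin

definition F :: "real \<Rightarrow> complex" where
  "F w = (CLINT s|lborel. complex_of_real (h s / (2 * pi)) * exp (- (\<i> * complex_of_real (w * s))))"

lemma F_meas[measurable]: "F \<in> borel_measurable lborel"
  unfolding F_def by measurable

lemma F_bound: "cmod (F w) \<le> (c - a) / (2 * pi)"
proof -
  have "cmod (F w) \<le> (LINT s|lborel. norm (complex_of_real (h s / (2 * pi)) * exp (- (\<i> * complex_of_real (w * s)))))"
    unfolding F_def by (rule integral_norm_bound)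
  also have "\<dots> = (LINT s|lborel. \<bar>h s\<bar> / (2 * pi))"
  proof (intro Bochner_Integration.integral_cong refl)
    fix s
    have ee: "exp (- (\<i> * complex_of_real (w * s))) = exp (\<i> * complex_of_real (- (w * s)))" by simp
    show "norm (complex_of_real (h s / (2 * pi)) * exp (- (\<i> * complex_of_real (w * s)))) = \<bar>h s\<bar> / (2 * pi)"
      unfolding ee norm_mult norm_exp_i_times norm_of_real by (simp add: abs_divide)
  qed
  also have "\<dots> \<le> (LINT s|lborel. indicator {a..c} s / (2 * pi))"
    by (intro integral_mono integrable_divide integrable_abs h_int ind_int) (use hb in \<open>auto intro: divide_right_mono\<close>)
  also have "\<dots> = (c - a) / (2 * pi)" using ac by simp
  finally show ?thesis .
qed

lemma F_sq_int: "set_integrable lborel {-pi..pi} (\<lambda>w. (cmod (F w))^2)"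
proof (rule set_integrable_bound[of _ _ "\<lambda>_. ((c - a) / (2 * pi))^2"])
  show "set_integrable lborel {-pi..pi} (\<lambda>_. ((c - a) / (2 * pi))^2)"
    by (rule borel_integrable_atLeastAtMost') (rule continuous_on_const)
  show "set_borel_measurable lborel {-pi..pi} (\<lambda>w. (cmod (F w))^2)"
    unfolding set_borel_measurable_def by measurable
  have "(cmod (F w))^2 \<le> ((c - a) / (2 * pi))^2" for w by (rule power_mono[OF F_bound]) simp
  then show "AE w\<in>{-pi..pi} in lborel. norm ((cmod (F w))^2) \<le> norm (((c - a) / (2 * pi))^2)" by auto
qed

lemma b_rep: "complex_of_real (b t) = set_lebesgue_integral lborel {-pi..pi} (\<lambda>w. F w * exp (\<i> * complex_of_real (w * t)))"
proof -
  define \<Psi> where "\<Psi> w s = complex_of_real (indicator {-pi..pi} w) * (complex_of_real (h s / (2 * pi)) * exp (\<i> * complex_of_real (w * (t - s))))" for w s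
  have "set_lebesgue_integral lborel {-pi..pi} (\<lambda>w. F w * exp (\<i> * complex_of_real (w * t))) = (CLINT w|lborel. CLINT s|lborel. \<Psi> w s)"
    unfolding set_lebesgue_integral_def
  proof (intro Bochner_Integration.integral_cong refl)
    fix w
    have "F w * exp (\<i> * complex_of_real (w * t)) = (CLINT s|lborel. complex_of_real (h s / (2 * pi)) * exp (- (\<i> * complex_of_real (w * s))) * exp (\<i> * complex_of_real (w * t)))"
      unfolding F_def by (rule integral_mult_left_zero[symmetric])
    also have "\<dots> = (CLINT s|lborel. complex_of_real (h s / (2 * pi)) * exp (\<i> * complex_of_real (w * (t - s))))"
    proof (intro Bochner_Integration.integral_cong refl)
      fix s
      have "exp (- (\<i> * complex_of_real (w * s))) * exp (\<i> * complex_of_real (w * t)) = exp (\<i> * complex_of_real (w * (t - s)))"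
        by (simp add: exp_add[symmetric] right_diff_distrib algebra_simps)
      then show "complex_of_real (h s / (2 * pi)) * exp (- (\<i> * complex_of_real (w * s))) * exp (\<i> * complex_of_real (w * t)) = complex_of_real (h s / (2 * pi)) * exp (\<i> * complex_of_real (w * (t - s)))"
        by (simp only: mult.assoc)
    qed
    finally have "F w * exp (\<i> * complex_of_real (w * t)) = (CLINT s|lborel. complex_of_real (h s / (2 * pi)) * exp (\<i> * complex_of_real (w * (t - s))))" .
    then have "indicator {-pi..pi} w *\<^sub>R (F w * exp (\<i> * complex_of_real (w * t))) = complex_of_real (indicator {-pi..pi} w) * (CLINT s|lborel. complex_of_real (h s / (2 * pi)) * exp (\<i> * complex_of_real (w * (t - s))))"
      by (simp add: scaleR_conv_of_real)
    also have "\<dots> = (CLINT s|lborel. \<Psi> w s)" unfolding \<Psi>_def by (rule integral_mult_right_zero[symmetric])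
    finally show "indicator {-pi..pi} w *\<^sub>R (F w * exp (\<i> * complex_of_real (w * t))) = (CLINT s|lborel. \<Psi> w s)" .
  qed
  also have "\<dots> = (CLINT s|lborel. CLINT w|lborel. \<Psi> w s)"
  proof (rule lborel_pair.Fubini_integral[symmetric])
    show "integrable (lborel \<Otimes>\<^sub>M lborel) (case_prod \<Psi>)"
    proof (rule prod_int_bound[of _ "indicator {-pi..pi}" "\<lambda>s. indicator {a..c} s / (2 * pi)"])
      show "case_prod \<Psi> \<in> borel_measurable (lborel \<Otimes>\<^sub>M lborel)" unfolding \<Psi>_def by measurable
      show "integrable lborel (indicator {-pi..pi} :: real \<Rightarrow> real)"
        by (rule integrable_real_indicator) (auto simp: emeasure_lborel_Icc_eq)
      show "integrable lborel (\<lambda>s. indicator {a..c} s / (2 * pi))" by (intro integrable_divide ind_int)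
      fix w s
      have l: "\<bar>h s\<bar> / (2 * pi) \<le> indicator {a..c} s / (2 * pi)" using hb[of s] by (intro divide_right_mono) auto
      have "norm (case_prod \<Psi> (w, s)) = indicator {-pi..pi} w * (\<bar>h s\<bar> / (2 * pi))"
        unfolding \<Psi>_def by (simp only: case_prod_conv norm_mult norm_exp_i_times norm_of_real) (simp add: abs_divide)
      then show "norm (case_prod \<Psi> (w, s)) \<le> indicator {-pi..pi} w * (indicator {a..c} s / (2 * pi))"
        using mult_left_mono[OF l, of "indicator {-pi..pi} w"] by simp
    qed
  qed
  also have "\<dots> = (CLINT s|lborel. complex_of_real (h s * K (t - s)))"
  proof (intro Bochner_Integration.integral_cong refl)
    fix s
    have "(CLINT w|lborel. \<Psi> w s) = (CLINT w|lborel. complex_of_real (h s / (2 * pi)) * (complex_of_real (indicator {-pi..pi} w) * exp (\<i> * complex_of_real (w * (t - s)))))"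
      unfolding \<Psi>_def by (intro Bochner_Integration.integral_cong refl) (simp add: algebra_simps)
    also have "\<dots> = complex_of_real (h s / (2 * pi)) * complex_of_real (2 * pi * K (t - s))"
      by (simp only: integral_mult_right_zero kernel_id)
    also have "\<dots> = complex_of_real (h s * K (t - s))" by (simp add: field_simps)
    finally show "(CLINT w|lborel. \<Psi> w s) = complex_of_real (h s * K (t - s))" .
  qed
  also have "\<dots> = complex_of_real (b t)" unfolding b_def by (rule integral_complex_of_real)
  finally show ?thesis by simp
qed

lemma b_BL: "b \<in> BL RealLine"
proof -
  have "bandlimited RealLine b" unfolding bandlimited.simps
    by (rule exI[of _ F]) (use F_meas F_sq_int b_rep in blast)
  then show ?thesis unfolding BL_def using b_L2 by auto
qed

lemma main_fub:
  assumes "pw v G"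
  shows "(LINT t|lborel. b t * v t) = (LINT s|lborel. h s * v s)"
proof -
  interpret pw v G by (rule assms)
  define \<Phi> where "\<Phi> s t = h s * (K (t - s) * v t)" for s t
  define Cv where "Cv = (LINT x|lborel. (K x)^2) + (LINT t|lborel. (v t)^2)"
  have Kt: "(LINT t|lborel. (K (t - s))^2) = (LINT x|lborel. (K x)^2)" for s
  proof -
    have "(LINT x|lborel. (K x)^2) = \<bar>1\<bar> *\<^sub>R (LINT x|lborel. (K (- s + 1 * x))^2)"
      by (rule lborel_integral_real_affine) simp
    then show ?thesis by simp
  qed
  have Kti: "integrable lborel (\<lambda>t. (K (t - s))^2)" for s
  proof -
    have "integrable lborel (\<lambda>x. (K (- s + 1 * x))^2)"
      by (rule lborel_integrable_real_affine[OF K_sq_int]) simp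
    then show ?thesis by simp
  qed
  have inner_bound: "(LINT t|lborel. \<bar>K (t - s) * v t\<bar>) \<le> Cv" for s
  proof -
    have "(LINT t|lborel. \<bar>K (t - s) * v t\<bar>) \<le> (LINT t|lborel. (K (t - s))^2 + (v t)^2)"
      by (intro integral_mono integrable_abs Kv_int Bochner_Integration.integrable_add Kti v_sq_int abs_mult_le_sq)
    also have "\<dots> = Cv" unfolding Cv_def Kt[of s, symmetric] by (intro Bochner_Integration.integral_add Kti v_sq_int)
    finally show ?thesis .
  qed
  have Cv0: "0 \<le> Cv" unfolding Cv_def by (intro add_nonneg_nonneg integral_nonneg_AE) auto
  have int: "integrable (lborel \<Otimes>\<^sub>M lborel) (case_prod \<Phi>)"
  proof (rule lborel_pair.Fubini_integrable)
    show "case_prod \<Phi> \<in> borel_measurable (lborel \<Otimes>\<^sub>M lborel)" unfolding \<Phi>_def by measurable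
    have eq: "(LINT t|lborel. norm (case_prod \<Phi> (s, t))) = \<bar>h s\<bar> * (LINT t|lborel. \<bar>K (t - s) * v t\<bar>)" for s
      unfolding \<Phi>_def by (simp add: abs_mult integral_mult_right_zero)
    show "integrable lborel (\<lambda>s. LINT t|lborel. norm (case_prod \<Phi> (s, t)))"
    proof (rule Bochner_Integration.integrable_bound[of _ "\<lambda>s. Cv * indicator {a..c} s"])
      show "integrable lborel (\<lambda>s. Cv * indicator {a..c} s)" by (intro integrable_mult_right ind_int)
      show "(\<lambda>s. LINT t|lborel. norm (case_prod \<Phi> (s, t))) \<in> borel_measurable lborel" unfolding \<Phi>_def by measurable
      have "\<bar>h s\<bar> * (LINT t|lborel. \<bar>K (t - s) * v t\<bar>) \<le> indicator {a..c} s * Cv" for s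
        using hb[of s] inner_bound[of s] by (intro mult_mono) (auto intro: integral_nonneg_AE)
      then show "AE s in lborel. norm (LINT t|lborel. norm (case_prod \<Phi> (s, t))) \<le> norm (Cv * indicator {a..c} s)"
        unfolding eq using Cv0 by (auto simp: abs_mult mult.commute intro!: integral_nonneg_AE order_trans[OF _ abs_ge_self])
    qed
    show "AE s in lborel. integrable lborel (\<lambda>t. case_prod \<Phi> (s, t))"
      unfolding \<Phi>_def by (auto intro!: integrable_mult_right Kv_int)
  qed
  have "(LINT t|lborel. LINT s|lborel. \<Phi> s t) = (LINT s|lborel. LINT t|lborel. \<Phi> s t)"
    by (rule lborel_pair.Fubini_integral[OF int])
  moreover have "(LINT s|lborel. \<Phi> s t) = b t * v t" for t
    unfolding \<Phi>_def b_def by (simp add: integral_mult_left_zero[symmetric] mult.assoc)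
  moreover have "(LINT t|lborel. \<Phi> s t) = h s * v s" for s
    unfolding \<Phi>_def by (simp add: integral_mult_right_zero reproduce)
  ultimately show ?thesis by simp
qed

lemma b_orth:
  assumes v: "v \<in> BL RealLine"
  shows "ip UNIV (\<lambda>t. h t - b t) v = 0"
proof -
  obtain G where G: "G \<in> borel_measurable lborel" "set_integrable lborel {-pi..pi} (\<lambda>w. (cmod (G w))^2)"
    "\<forall>t. complex_of_real (v t) = set_lebesgue_integral lborel {-pi..pi} (\<lambda>w. G w * exp (\<i> * complex_of_real (w * t)))"
    using v unfolding BL_def by auto
  have vL: "v \<in> L2 UNIV" using v unfolding BL_def by simp
  have pwv: "pw v G" by unfold_locales (use G vL in auto)
  have hv: "integrable lborel (\<lambda>t. h t * v t)" using L2_prod[OF _ h_L2 vL] by (simp add: set_integrable_def)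
  have bv: "integrable lborel (\<lambda>t. b t * v t)" using L2_prod[OF _ b_L2 vL] by (simp add: set_integrable_def)
  have "ip UNIV (\<lambda>t. h t - b t) v = (LINT t|lborel. h t * v t - b t * v t)"
    unfolding ip_def set_lebesgue_integral_def by (simp add: algebra_simps)
  also have "\<dots> = (LINT t|lborel. h t * v t) - (LINT t|lborel. b t * v t)"
    by (rule Bochner_Integration.integral_diff[OF hv bv])
  also have "\<dots> = 0" using main_fub[OF pwv] by simp
  finally show ?thesis .
qed

end

lemma bexist_RealLine:
  assumes hm: "h \<in> borel_measurable lborel" and hb: "\<And>s. \<bar>h s\<bar> \<le> indicator {a..c} s" and ac: "a \<le> c"
  shows "\<exists>b\<in>BL RealLine. \<forall>v\<in>BL RealLine. ip UNIV (\<lambda>t. h t - b t) v = 0"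
proof -
  interpret hk h a c by unfold_locales (use assms in auto)
  show ?thesis using b_BL b_orth by blast
qed


lemma nrm_eq: "nrm D = gnrm (ip D)" by (rule ext) (simp add: nrm_def gnrm_def)
lemma proj_eq: "proj D S = gproj (ip D) S" by (rule ext) (simp add: proj_def gproj_def nrm_eq)
lemma Hmap_eq: "Hmap dm \<alpha> tt N = gH (ip (dset dm)) (hfun \<alpha> tt) N"
  by (intro ext) (simp add: Hmap_def gH_def)
lemma ipN_eq: "ipN dm \<alpha> tt N = gipN (ip (dset dm)) (hfun \<alpha> tt) N"
  by (intro ext) (simp add: ipN_def gipN_def nrm_eq)
lemma nrmN_eq: "nrmN dm \<alpha> tt N = gnrmN (ip (dset dm)) (hfun \<alpha> tt) N"
  by (intro ext) (simp add: nrmN_def gnrmN_def ipN_eq)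
lemma projN_eq: "projN dm \<alpha> tt N = gprojN (ip (dset dm)) (hfun \<alpha> tt) N (BL dm)"
  by (intro ext) (simp add: projN_def gprojN_def Hmap_eq nrmN_eq)
lemma Hdag_eq: "Hdag dm \<alpha> tt N = gHdag (ip (dset dm)) (hfun \<alpha> tt) N (BL dm)"
  by (intro ext) (simp add: Hdag_def gHdag_def Hmap_eq projN_eq nrm_eq)
lemma Cset_eq: "Cset dm \<alpha> tt N \<theta> = gC (L2 (dset dm)) (ip (dset dm)) (hfun \<alpha> tt) N \<theta>"
  by (simp add: Cset_def gC_def)

lemma bexist:
  assumes dom_T: "\<And>T. dm = Interval T \<Longrightarrow> odd T"
    and alpha: "\<alpha> \<ge> 0"
    and t0: "tt 0 = 0"
    and tmono: "\<And>n. n < N \<Longrightarrow> tt n < tt (Suc n)"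
    and tN: "tt N \<in> dset dm"
    and n: "n \<in> {1..N}"
  shows "\<exists>b\<in>BL dm. \<forall>v\<in>BL dm. ip (dset dm) (\<lambda>t. hfun \<alpha> tt n t - b t) v = 0"
proof (cases dm)
  case RealLine
  have hb: "\<bar>hfun \<alpha> tt n s\<bar> \<le> indicator {tt (n-1)..tt n} s" for s
    using hfun_nonneg[of \<alpha> tt n s] hfun_le1[OF alpha, of tt n s] by simp
  have ac: "tt (n-1) \<le> tt n" using tt_mono[of N tt, OF tmono, of "n-1" n] n by auto
  show ?thesis unfolding RealLine dset.simps
    by (rule bexist_RealLine[OF hfun_meas hb ac])
next
  case (Interval T)
  have "hfun \<alpha> tt n \<in> L2 {0..real T}" by (rule hfun_L2[OF alpha]) simp
  then show ?thesis unfolding Interval dset.simps by (rule bexist_Interval)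
qed

theorem mainTheorem6:
  fixes dm :: domain and \<alpha> :: real and N :: nat and tt :: "nat \<Rightarrow> real"
    and x :: "real \<Rightarrow> real" and e :: "nat \<Rightarrow> real"
  assumes dom_T: "\<And>T. dm = Interval T \<Longrightarrow> odd T"
    and alpha: "\<alpha> \<ge> 0"
    and N: "N \<ge> 1"
    and t0: "tt 0 = 0"
    and tmono: "\<And>n. n < N \<Longrightarrow> tt n < tt (Suc n)"
    and tN: "tt N \<in> dset dm"
    and xB: "x \<in> BL dm"
  defines "\<theta>0 \<equiv> Hmap dm \<alpha> tt N x"
    and "\<theta> \<equiv> (\<lambda>n. Hmap dm \<alpha> tt N x n - e n)"
    and "ebar \<equiv> projN dm \<alpha> tt N e"
  shows "(\<lambda>k. nrm (dset dm)
            (\<lambda>s. ((proj (dset dm) (BL dm) \<circ> proj (dset dm) (Cset dm \<alpha> tt N \<theta>)) ^^ k) (\<lambda>_. 0) s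
                 - Hdag dm \<alpha> tt N (\<lambda>n. \<theta>0 n - ebar n) s)) \<longlonglongrightarrow> 0
       \<and> (nrmN dm \<alpha> tt N ebar)^2 + (nrmN dm \<alpha> tt N (\<lambda>n. e n - ebar n))^2 = (nrmN dm \<alpha> tt N e)^2
       \<and> nrmN dm \<alpha> tt N ebar \<le> nrmN dm \<alpha> tt N e"
proof -
  define D where "D = dset dm"
  have sipD: "sip (L2 D) (ip D)" unfolding D_def by (rule sip_L2[OF dset_sets])
  have "\<forall>n\<in>{1..N}. \<exists>b. b \<in> BL dm \<and> (\<forall>v\<in>BL dm. ip D (\<lambda>t. hfun \<alpha> tt n t - b t) v = 0)"
    using bexist[OF dom_T alpha t0 tmono tN] unfolding D_def by blast
  then obtain b where b: "\<And>n. n \<in> {1..N} \<Longrightarrow> b n \<in> BL dm \<and> (\<forall>v\<in>BL dm. ip D (\<lambda>t. hfun \<alpha> tt n t - b n t) v = 0)"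
    by metis
  interpret absetup "L2 D" "ip D" "BL dm" "hfun \<alpha> tt" N b
  proof (rule absetup.intro[OF sipD], unfold_locales)
    show "BL dm \<subseteq> L2 D" unfolding BL_def D_def by auto
    show "(\<lambda>_. 0) \<in> BL dm" by (rule BL_zero)
    show "\<And>u v a c. u \<in> BL dm \<Longrightarrow> v \<in> BL dm \<Longrightarrow> (\<lambda>t. a * u t + c * v t) \<in> BL dm" by (rule BL_lin)
    show "\<And>n. n \<in> {1..N} \<Longrightarrow> hfun \<alpha> tt n \<in> L2 D" unfolding D_def by (rule hfun_L2[OF alpha dset_sets])
    show "\<And>m n. m \<in> {1..N} \<Longrightarrow> n \<in> {1..N} \<Longrightarrow> m \<noteq> n \<Longrightarrow> ip D (hfun \<alpha> tt m) (hfun \<alpha> tt n) = 0"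
      by (rule hfun_orth[of N tt, OF tmono])
    show "\<And>n. n \<in> {1..N} \<Longrightarrow> 0 < ip D (hfun \<alpha> tt n) (hfun \<alpha> tt n)"
      unfolding D_def by (rule hfun_pos[of N tt, OF tmono t0 tN _ alpha])
    show "\<And>n. n \<in> {1..N} \<Longrightarrow> b n \<in> BL dm" using b by auto
    show "\<And>n v. n \<in> {1..N} \<Longrightarrow> v \<in> BL dm \<Longrightarrow> ip D (\<lambda>t. hfun \<alpha> tt n t - b n t) v = 0" using b by auto
  qed
  note M = abstract_main[OF xB, of e]
  show ?thesis unfolding \<theta>0_def \<theta>_def ebar_def proj_eq nrm_eq Cset_eq Hmap_eq Hdag_eq projN_eq nrmN_eq
    using M unfolding D_def .
qed


end
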